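(* Let $0<\sigma\le 1$ and let $(u,m)$ be the classical solution of the system \[ \begin{cases} u_t + \frac{\sigma^2}{2} u_{xx} - ru + G(u_x,m)^2 = 0, & 0<t<T,\ 0<x<L,\\ m_t - \frac{\sigma^2}{2} m_{xx} - \{G(u_x,m)m\}_x = 0, & 0<t<T,\ 0<x<L,\\ m(0,x)=m_0(x),\quad u(T,x)=u_T(x), & 0\le x\le L,\\ u_x(t,0)=u_x(t,L)=0, & 0\le t\le T,\\ \frac{\sigma^2}{2} m_x(t,x) + G(u_x,m)m(t,x) = 0, & 0\le t\le T,\ x\in\{0,L\}, \end{cases} \] where $G(u_x,m)(t,x) := \frac12\left(b + c\int_0^L u_x(t,y)m(t,y)\,dy - u_x(t,x)\right)$. Then $\|u_t\|_{L^2((0,T)\times(0,L))}\le C$, where $C$ does not depend on $\sigma$.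
   Context: Standing setting: $L,T,r>0$ are constants, $\epsilon>0$, and $b=\frac{2}{2+\epsilon}$, $c=\frac{\epsilon}{2+\epsilon}$. The data satisfy: $u_T,m_0\in C^{2+\gamma}([0,L])$ for some $\gamma>0$; $u_T'(0)=u_T'(L)=0$ and $m_0(0)=m_0'(0)=m_0(L)=m_0'(L)=0$; $m_0$ is a probability density on $[0,L]$; $u_T\ge 0$. Constants may depend on $u_T,m_0,L,T,r,\epsilon$ but not on $\sigma\in(0,1]$. *)

theory Defs
  imports "HOL-Analysis.Analysis"
begin

definition bcoef :: "real \<Rightarrow> real" where "bcoef \<epsilon> = 2 / (2 + \<epsilon>)"
definition ccoef :: "real \<Rightarrow> real" where "ccoef \<epsilon> = \<epsilon> / (2 + \<epsilon>)"

definition C2gamma :: "real \<Rightarrow> real \<Rightarrow> (real \<Rightarrow> real) \<Rightarrow> (real \<Rightarrow> real) \<Rightarrow> (real \<Rightarrow> real) \<Rightarrow> bool" where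
  "C2gamma L \<gamma> f f1 f2 \<longleftrightarrow>
     (\<forall>x\<in>{0..L}. (f has_real_derivative f1 x) (at x within {0..L})
               \<and> (f1 has_real_derivative f2 x) (at x within {0..L}))
     \<and> (\<exists>K. \<forall>x\<in>{0..L}. \<forall>y\<in>{0..L}. \<bar>f2 x - f2 y\<bar> \<le> K * \<bar>x - y\<bar> powr \<gamma>)"

definition Gfun :: "real \<Rightarrow> real \<Rightarrow> (real \<Rightarrow> real \<Rightarrow> real) \<Rightarrow> (real \<Rightarrow> real \<Rightarrow> real) \<Rightarrow> real \<Rightarrow> real \<Rightarrow> real" where
  "Gfun \<epsilon> L ux m t x =
     (bcoef \<epsilon> + ccoef \<epsilon> * integral {0..L} (\<lambda>y. ux t y * m t y) - ux t x) / 2"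

definition classical_solution ::
  "real \<Rightarrow> real \<Rightarrow> real \<Rightarrow> real \<Rightarrow> real \<Rightarrow> (real \<Rightarrow> real) \<Rightarrow> (real \<Rightarrow> real) \<Rightarrow>
   (real \<Rightarrow> real \<Rightarrow> real) \<Rightarrow> (real \<Rightarrow> real \<Rightarrow> real) \<Rightarrow> (real \<Rightarrow> real \<Rightarrow> real) \<Rightarrow> (real \<Rightarrow> real \<Rightarrow> real) \<Rightarrow>
   (real \<Rightarrow> real \<Rightarrow> real) \<Rightarrow> (real \<Rightarrow> real \<Rightarrow> real) \<Rightarrow> (real \<Rightarrow> real \<Rightarrow> real) \<Rightarrow> (real \<Rightarrow> real \<Rightarrow> real) \<Rightarrow> bool" where
  "classical_solution L T r \<epsilon> \<sigma> uT m0 u ut ux uxx m mt mx mxx \<longleftrightarrow>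
    continuous_on ({0..T} \<times> {0..L}) (\<lambda>(t,x). u t x) \<and>
    continuous_on ({0..T} \<times> {0..L}) (\<lambda>(t,x). ut t x) \<and>
    continuous_on ({0..T} \<times> {0..L}) (\<lambda>(t,x). ux t x) \<and>
    continuous_on ({0..T} \<times> {0..L}) (\<lambda>(t,x). uxx t x) \<and>
    continuous_on ({0..T} \<times> {0..L}) (\<lambda>(t,x). m t x) \<and>
    continuous_on ({0..T} \<times> {0..L}) (\<lambda>(t,x). mt t x) \<and>
    continuous_on ({0..T} \<times> {0..L}) (\<lambda>(t,x). mx t x) \<and>
    continuous_on ({0..T} \<times> {0..L}) (\<lambda>(t,x). mxx t x) \<and>
    (\<forall>t\<in>{0..T}. \<forall>x\<in>{0..L}.
       ((\<lambda>s. u s x) has_real_derivative ut t x) (at t within {0..T}) \<and>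
       ((\<lambda>y. u t y) has_real_derivative ux t x) (at x within {0..L}) \<and>
       ((\<lambda>y. ux t y) has_real_derivative uxx t x) (at x within {0..L}) \<and>
       ((\<lambda>s. m s x) has_real_derivative mt t x) (at t within {0..T}) \<and>
       ((\<lambda>y. m t y) has_real_derivative mx t x) (at x within {0..L}) \<and>
       ((\<lambda>y. mx t y) has_real_derivative mxx t x) (at x within {0..L})) \<and>
    (\<forall>t\<in>{0<..<T}. \<forall>x\<in>{0<..<L}.
       ut t x + \<sigma>\<^sup>2 / 2 * uxx t x - r * u t x + (Gfun \<epsilon> L ux m t x)\<^sup>2 = 0 \<and>
       ((\<lambda>y. Gfun \<epsilon> L ux m t y * m t y) has_real_derivative (mt t x - \<sigma>\<^sup>2 / 2 * mxx t x)) (at x)) \<and>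
    (\<forall>x\<in>{0..L}. m 0 x = m0 x \<and> u T x = uT x) \<and>
    (\<forall>t\<in>{0..T}. ux t 0 = 0 \<and> ux t L = 0) \<and>
    (\<forall>t\<in>{0..T}. \<forall>x\<in>{0, L}. \<sigma>\<^sup>2 / 2 * mx t x + Gfun \<epsilon> L ux m t x * m t x = 0)"

end

theory Submission
  imports Defs
begin


lemma max_at_right_end_deriv:
  fixes g :: "real \<Rightarrow> real"
  assumes d: "(g has_real_derivative D) (at x within {a..x})" and ax: "a < x"
    and mx: "\<forall>y\<in>{a..x}. g y \<le> g x"
  shows "0 \<le> D"
proof -
  have lim: "((\<lambda>y. (g y - g x) / (y - x)) \<longlongrightarrow> D) (at x within {a..x})"
    using d by (simp add: has_field_derivative_iff)
  have nt: "\<not> trivial_limit (at x within {a..x})"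
    using ax by (simp add: trivial_limit_within islimpt_Icc)
  have ev: "\<forall>\<^sub>F y in at x within {a..x}. 0 \<le> (g y - g x) / (y - x)"
    unfolding eventually_at_filter
  proof (rule always_eventually, intro allI impI)
    fix y assume "y \<noteq> x" "y \<in> {a..x}"
    then have "y < x" by auto
    moreover have "g y - g x \<le> 0" using mx \<open>y \<in> {a..x}\<close> by auto
    ultimately show "0 \<le> (g y - g x) / (y - x)"
      by (simp add: divide_nonpos_neg)
  qed
  show ?thesis using tendsto_lowerbound[OF lim ev nt] .
qed

lemma max_at_left_end_deriv:
  fixes g :: "real \<Rightarrow> real"
  assumes d: "(g has_real_derivative D) (at x within {x..b})" and xb: "x < b"
    and mx: "\<forall>y\<in>{x..b}. g y \<le> g x"
  shows "D \<le> 0"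
proof -
  have lim: "((\<lambda>y. (g y - g x) / (y - x)) \<longlongrightarrow> D) (at x within {x..b})"
    using d by (simp add: has_field_derivative_iff)
  have nt: "\<not> trivial_limit (at x within {x..b})"
    using xb by (simp add: trivial_limit_within islimpt_Icc)
  have ev: "\<forall>\<^sub>F y in at x within {x..b}. (g y - g x) / (y - x) \<le> 0"
    unfolding eventually_at_filter
  proof (rule always_eventually, intro allI impI)
    fix y assume "y \<noteq> x" "y \<in> {x..b}"
    then have "y > x" by auto
    moreover have "g y - g x \<le> 0" using mx \<open>y \<in> {x..b}\<close> by auto
    ultimately show "(g y - g x) / (y - x) \<le> 0"
      by (simp add: divide_nonpos_pos)
  qed
  show ?thesis using tendsto_upperbound[OF lim ev nt] .
qed

lemma local_max_second:
  fixes g gp :: "real \<Rightarrow> real"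
  assumes d: "0 < d"
    and dg: "\<And>y. \<bar>y - x\<bar> < d \<Longrightarrow> (g has_real_derivative gp y) (at y)"
    and mx: "\<And>y. \<bar>y - x\<bar> < d \<Longrightarrow> g y \<le> g x"
    and dg1: "(gp has_real_derivative gpp) (at x)"
  shows "gp x = 0 \<and> gpp \<le> 0"
proof -
  have z: "gp x = 0"
    using DERIV_local_max[OF dg[of x] d] mx d by (auto simp: abs_minus_commute)
  moreover have "gpp \<le> 0"
  proof (rule ccontr)
    assume "\<not> gpp \<le> 0"
    then have pos: "gpp > 0" by simp
    have lim: "((\<lambda>y. (gp y - gp x) / (y - x)) \<longlongrightarrow> gpp) (at x)"
      using dg1 by (simp add: has_field_derivative_iff)
    then have "\<forall>\<^sub>F y in at x. (gp y - gp x) / (y - x) > 0"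
      using pos by (rule order_tendstoD)
    then obtain e where e: "e > 0" and he: "\<And>y. y \<noteq> x \<Longrightarrow> dist y x < e \<Longrightarrow> (gp y - gp x) / (y - x) > 0"
      unfolding eventually_at by blast
    define y where "y = x + min e d / 2"
    have xy: "x < y" using e d by (simp add: y_def)
    have yd: "\<bar>y - x\<bar> < d" "y - x < e" using e d by (auto simp: y_def)
    have "continuous_on {x..y} g"
    proof (rule continuous_at_imp_continuous_on, intro ballI)
      fix z assume "z \<in> {x..y}"
      then have "\<bar>z - x\<bar> < d" using yd by auto
      then show "isCont g z" by (rule DERIV_isCont[OF dg])
    qed
    moreover have "\<And>z. x < z \<Longrightarrow> z < y \<Longrightarrow> g differentiable (at z)"
    proof -
      fix z assume "x < z" "z < y"
      then have "\<bar>z - x\<bar> < d" using yd by auto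
      then show "g differentiable (at z)" using dg real_differentiable_def by blast
    qed
    ultimately obtain l z where z1: "x < z" "z < y" and dz: "(g has_real_derivative l) (at z)"
      and eq: "g y - g x = (y - x) * l"
      using MVT[OF xy] by blast
    have "\<bar>z - x\<bar> < d" using z1 yd by auto
    then have "l = gp z" using DERIV_unique[OF dz dg] by blast
    moreover have "(gp z - gp x) / (z - x) > 0"
      using he[of z] z1 yd by (auto simp: dist_real_def)
    ultimately have "l > 0" using z1 z by (simp add: zero_less_divide_iff)
    then have "(y - x) * l > 0" using xy by simp
    then have "g y > g x" using eq by simp
    moreover have "g y \<le> g x" using mx yd by auto
    ultimately show False by simp
  qed
  ultimately show ?thesis by simp
qed

lemma deriv_lip_bound:
  fixes f :: "real \<Rightarrow> real"
  assumes d: "(f has_real_derivative D) (at x within {a..b})" and ab: "a < b" and x: "x \<in> {a..b}"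
    and lip: "\<And>y. y \<in> {a..b} \<Longrightarrow> \<bar>f y - f x\<bar> \<le> K * \<bar>y - x\<bar>"
  shows "\<bar>D\<bar> \<le> K"
proof -
  have lim: "((\<lambda>y. \<bar>(f y - f x) / (y - x)\<bar>) \<longlongrightarrow> \<bar>D\<bar>) (at x within {a..b})"
    using d unfolding has_field_derivative_iff by (rule tendsto_rabs)
  have nt: "\<not> trivial_limit (at x within {a..b})"
    using ab x by (simp add: trivial_limit_within islimpt_Icc)
  have ev: "\<forall>\<^sub>F y in at x within {a..b}. \<bar>(f y - f x) / (y - x)\<bar> \<le> K"
    unfolding eventually_at_filter
  proof (rule always_eventually, intro allI impI)
    fix y assume "y \<noteq> x" "y \<in> {a..b}"
    then have "\<bar>y - x\<bar> > 0" by auto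
    moreover have "\<bar>f y - f x\<bar> \<le> K * \<bar>y - x\<bar>" using lip \<open>y \<in> {a..b}\<close> by auto
    ultimately show "\<bar>(f y - f x) / (y - x)\<bar> \<le> K"
      by (simp add: abs_divide divide_le_eq)
  qed
  show ?thesis using tendsto_upperbound[OF lim ev nt] .
qed

lemma dlin1:
  fixes f :: "real \<Rightarrow> real"
  assumes "(f has_real_derivative D) (at x within A)"
  shows "((\<lambda>z. s * (f z - c) - K * (z - c')) has_real_derivative s * D - K) (at x within A)"
  using assms by (auto intro!: derivative_eq_intros)
lemma dlin2:
  fixes f :: "real \<Rightarrow> real"
  assumes "(f has_real_derivative D) (at x within A)"
  shows "((\<lambda>z. s * (c - f z) - K * (c' - z)) has_real_derivative K - s * D) (at x within A)"
  using assms by (auto intro!: derivative_eq_intros)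
lemma dlin3:
  fixes f g :: "real \<Rightarrow> real"
  assumes "(f has_real_derivative D) (at x within A)" "(g has_real_derivative E) (at x within A)"
  shows "((\<lambda>z. s * (f z - g z) - c) has_real_derivative s * (D - E)) (at x within A)"
  using assms by (auto intro!: derivative_eq_intros)
lemma dlin4:
  fixes f g :: "real \<Rightarrow> real"
  assumes "(f has_real_derivative D) (at x within A)" "(g has_real_derivative E) (at x within A)"
  shows "((\<lambda>z. s * (f z - g z)) has_real_derivative s * (D - E)) (at x within A)"
  using assms by (auto intro!: derivative_eq_intros)
lemma dW1:
  fixes f :: "real \<Rightarrow> real"
  assumes "(f has_real_derivative f') (at x within A)"
  shows "((\<lambda>\<xi>. -(e * (\<xi> * (L - \<xi>) + \<delta>) * f \<xi>)) has_real_derivative -(e * ((L - 2 * x) * f x + (x * (L - x) + \<delta>) * f'))) (at x within A)"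
  using assms by (auto intro!: derivative_eq_intros simp: algebra_simps)
lemma dW2:
  fixes f g :: "real \<Rightarrow> real"
  assumes "(f has_real_derivative f') (at x within A)" "(g has_real_derivative g') (at x within A)"
  shows "((\<lambda>\<xi>. -(e * ((L - 2 * \<xi>) * f \<xi> + (\<xi> * (L - \<xi>) + \<delta>) * g \<xi>))) has_real_derivative
     -(e * (-2 * f x + (L - 2 * x) * f' + (L - 2 * x) * g x + (x * (L - x) + \<delta>) * g'))) (at x within A)"
  using assms by (auto intro!: derivative_eq_intros simp: algebra_simps)
lemma dWt:
  fixes f :: "real \<Rightarrow> real"
  assumes "(f has_real_derivative f') (at t within A)"
  shows "((\<lambda>t. -(exp (-(lam * t)) * P * f t)) has_real_derivative -(P * exp (-(lam * t)) * (f' - lam * f t))) (at t within A)"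
  using assms by (auto intro!: derivative_eq_intros simp: algebra_simps)
lemma dGm:
  fixes f g :: "real \<Rightarrow> real"
  assumes "(f has_real_derivative f') (at x)" "(g has_real_derivative g') (at x)"
  shows "((\<lambda>y. (c0 - f y) / 2 * g y) has_real_derivative (- f' / 2 * g x + (c0 - f x) / 2 * g')) (at x)"
  using assms by (auto intro!: derivative_eq_intros simp: field_simps)

lemma cont_bound:
  fixes f :: "'a::metric_space \<Rightarrow> real"
  assumes "continuous_on S f" "compact S"
  obtains B where "B > 0" "\<And>p. p \<in> S \<Longrightarrow> \<bar>f p\<bar> \<le> B"
proof -
  have "bounded (f ` S)" by (rule compact_imp_bounded[OF compact_continuous_image[OF assms]])
  then obtain B where B: "\<And>p. p \<in> S \<Longrightarrow> \<bar>f p\<bar> \<le> B" unfolding bounded_iff by auto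
  show ?thesis by (rule that[of "\<bar>B\<bar> + 1"]) (use B in force)+
qed


lemma pos_mult_le0: "0 < (c::real) \<Longrightarrow> c * X \<le> 0 \<Longrightarrow> X \<le> 0"
  by (simp add: mult_le_0_iff)
lemma pos_mult_ge0: "0 < (c::real) \<Longrightarrow> 0 \<le> c * X \<Longrightarrow> 0 \<le> X"
  by (simp add: zero_le_mult_iff)



lemma shift_deriv:
  fixes f :: "real \<Rightarrow> real"
  assumes "(f has_real_derivative D) (at (a + e))"
  shows "((\<lambda>e. f (a + e)) has_real_derivative D) (at e)"
  using DERIV_shift[of f D e a] assms by (simp add: add.commute)

locale sol =
  fixes L T r \<epsilon> \<sigma> K :: real and uT m0 :: "real \<Rightarrow> real"
    and u ut ux uxx m mt mx mxx :: "real \<Rightarrow> real \<Rightarrow> real"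
  assumes L: "L > 0" and T: "T > 0" and r: "r > 0" and eps: "\<epsilon> > 0"
    and sig: "0 < \<sigma>" "\<sigma> \<le> 1"
    and cs: "classical_solution L T r \<epsilon> \<sigma> uT m0 u ut ux uxx m mt mx mxx"
    and m0nn: "\<forall>x\<in>{0..L}. m0 x \<ge> 0" and m0int: "integral {0..L} m0 = 1"
    and Kpos: "K > 0" and Klip: "\<And>x y. x \<in> {0..L} \<Longrightarrow> y \<in> {0..L} \<Longrightarrow> \<bar>uT x - uT y\<bar> \<le> K * \<bar>x - y\<bar>"
begin

abbreviation "S \<equiv> {0..T} \<times> {0..L}"

lemma cont_u: "continuous_on S (\<lambda>(t,x). u t x)"
  and cont_ut: "continuous_on S (\<lambda>(t,x). ut t x)"
  and cont_ux: "continuous_on S (\<lambda>(t,x). ux t x)"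
  and cont_uxx: "continuous_on S (\<lambda>(t,x). uxx t x)"
  and cont_m: "continuous_on S (\<lambda>(t,x). m t x)"
  and cont_mt: "continuous_on S (\<lambda>(t,x). mt t x)"
  and cont_mx: "continuous_on S (\<lambda>(t,x). mx t x)"
  and cont_mxx: "continuous_on S (\<lambda>(t,x). mxx t x)"
  using cs unfolding classical_solution_def by auto

lemma der:
  assumes "t \<in> {0..T}" "x \<in> {0..L}"
  shows "((\<lambda>s. u s x) has_real_derivative ut t x) (at t within {0..T})"
    "((\<lambda>y. u t y) has_real_derivative ux t x) (at x within {0..L})"
    "((\<lambda>y. ux t y) has_real_derivative uxx t x) (at x within {0..L})"
    "((\<lambda>s. m s x) has_real_derivative mt t x) (at t within {0..T})"
    "((\<lambda>y. m t y) has_real_derivative mx t x) (at x within {0..L})"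
    "((\<lambda>y. mx t y) has_real_derivative mxx t x) (at x within {0..L})"
  using cs assms unfolding classical_solution_def by auto

lemma hjb:
  assumes "t \<in> {0<..<T}" "x \<in> {0<..<L}"
  shows "ut t x + \<sigma>\<^sup>2 / 2 * uxx t x - r * u t x + (Gfun \<epsilon> L ux m t x)\<^sup>2 = 0"
  using cs assms unfolding classical_solution_def by auto

lemma fp:
  assumes "t \<in> {0<..<T}" "x \<in> {0<..<L}"
  shows "((\<lambda>y. Gfun \<epsilon> L ux m t y * m t y) has_real_derivative (mt t x - \<sigma>\<^sup>2 / 2 * mxx t x)) (at x)"
  using cs assms unfolding classical_solution_def by auto

lemma init: "x \<in> {0..L} \<Longrightarrow> m 0 x = m0 x" and termc: "x \<in> {0..L} \<Longrightarrow> u T x = uT x"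
  using cs unfolding classical_solution_def by auto

lemma bcu: "t \<in> {0..T} \<Longrightarrow> ux t 0 = 0" "t \<in> {0..T} \<Longrightarrow> ux t L = 0"
  using cs unfolding classical_solution_def by auto

lemma bcm: "t \<in> {0..T} \<Longrightarrow> \<sigma>\<^sup>2 / 2 * mx t 0 + Gfun \<epsilon> L ux m t 0 * m t 0 = 0"
   "t \<in> {0..T} \<Longrightarrow> \<sigma>\<^sup>2 / 2 * mx t L + Gfun \<epsilon> L ux m t L * m t L = 0"
  using cs unfolding classical_solution_def by auto

lemma derx_int:
  assumes "t \<in> {0..T}" "x \<in> {0<..<L}"
  shows "((\<lambda>y. u t y) has_real_derivative ux t x) (at x)"
    "((\<lambda>y. ux t y) has_real_derivative uxx t x) (at x)"
    "((\<lambda>y. m t y) has_real_derivative mx t x) (at x)"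
    "((\<lambda>y. mx t y) has_real_derivative mxx t x) (at x)"
  using der[OF assms(1), of x] assms(2) at_within_Icc_at[of 0 x L] by auto

lemma cont_pt_u:
  assumes "D \<subseteq> {0..T} \<times> {0..L}" "continuous_on E f" "f ` E \<subseteq> D" 
  shows "continuous_on E (\<lambda>q. u (fst (f q)) (snd (f q)))"
proof -
  have "continuous_on E (\<lambda>q. (\<lambda>(t,x). u t x) (f q))"
    by (rule continuous_on_compose2[OF cont_u assms(2)]) (use assms in auto)
  then show ?thesis by (simp add: case_prod_beta)
qed

lemma lip_dir:
  assumes s: "s = 1 \<or> s = -1" and tau: "0 < \<tau>" "\<tau> < T"
    and t: "t \<in> {\<tau>..T}" and x: "x \<in> {0..L}" and y: "y \<in> {0..L}" and yx: "y \<le> x"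
  shows "s * (u t x - u t y) \<le> K * (x - y)"
proof -
  define Dm where "Dm = {\<tau>..T} \<times> ({0..L} \<times> {0..L} \<inter> {p. snd p \<le> fst p})"
  define \<Phi> where "\<Phi> = (\<lambda>q::real\<times>real\<times>real. s * (u (fst q) (fst (snd q)) - u (fst q) (snd (snd q))) - K * (fst (snd q) - snd (snd q)))"
  have cDm: "compact Dm" unfolding Dm_def
    by (intro compact_Times compact_Int_closed compact_Times closed_Collect_le continuous_intros) auto
  have "(t, x, y) \<in> Dm" using t x y yx unfolding Dm_def by auto
  then have neDm: "Dm \<noteq> {}" by auto
  have sub1: "(\<lambda>q. (fst q, fst (snd q))) ` Dm \<subseteq> {0..T} \<times> {0..L}"
    and sub2: "(\<lambda>q. (fst q, snd (snd q))) ` Dm \<subseteq> {0..T} \<times> {0..L}" using tau unfolding Dm_def by auto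
  have c1: "continuous_on Dm (\<lambda>q. u (fst q) (fst (snd q)))"
    using cont_pt_u[OF order_refl _ sub1] by (simp add: continuous_intros)
  have c2: "continuous_on Dm (\<lambda>q. u (fst q) (snd (snd q)))"
    using cont_pt_u[OF order_refl _ sub2] by (simp add: continuous_intros)
  have cPhi: "continuous_on Dm \<Phi>" unfolding \<Phi>_def
    by (intro continuous_intros c1 c2)
  obtain q0 where q0: "q0 \<in> Dm" and qmax: "\<And>q. q \<in> Dm \<Longrightarrow> \<Phi> q \<le> \<Phi> q0"
    using continuous_attains_sup[OF cDm neDm cPhi] by blast
  obtain t0 x0 y0 where q0e: "q0 = (t0, x0, y0)" by (cases q0) auto
  have t0: "t0 \<in> {\<tau>..T}" and x0: "x0 \<in> {0..L}" and y0: "y0 \<in> {0..L}" and yx0: "y0 \<le> x0"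
    using q0 unfolding q0e Dm_def by auto
  have inD: "\<And>t' x' y'. t' \<in> {\<tau>..T} \<Longrightarrow> x' \<in> {0..L} \<Longrightarrow> y' \<in> {0..L} \<Longrightarrow> y' \<le> x' \<Longrightarrow> (t',x',y') \<in> Dm"
    unfolding Dm_def by auto
  have mx: "\<And>t' x' y'. t' \<in> {\<tau>..T} \<Longrightarrow> x' \<in> {0..L} \<Longrightarrow> y' \<in> {0..L} \<Longrightarrow> y' \<le> x' \<Longrightarrow>
      s * (u t' x' - u t' y') - K * (x' - y') \<le> s * (u t0 x0 - u t0 y0) - K * (x0 - y0)"
    using qmax[OF inD] unfolding \<Phi>_def q0e by auto
  define M where "M = s * (u t0 x0 - u t0 y0) - K * (x0 - y0)"
  have s2: "s * s = 1" using s by auto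
  have "M \<le> 0"
  proof (rule ccontr)
    assume "\<not> M \<le> 0" then have Mpos: "M > 0" by simp
    have "x0 \<noteq> y0" using Mpos unfolding M_def by auto
    then have yx0': "y0 < x0" using yx0 by auto
    have t0T: "t0 < T"
    proof (rule ccontr)
      assume "\<not> t0 < T" then have "t0 = T" using t0 by auto
      then have "M = s * (uT x0 - uT y0) - K * (x0 - y0)" unfolding M_def using termc x0 y0 by auto
      also have "\<dots> \<le> 0" using Klip[OF x0 y0] yx0 s by auto
      finally show False using Mpos by simp
    qed
    have t0in: "t0 \<in> {0..T}" using t0 tau by auto
    have x0L: "x0 < L"
    proof (rule ccontr)
      assume "\<not> x0 < L" then have xL: "x0 = L" using x0 by auto
      have d: "((\<lambda>\<xi>. s * (u t0 \<xi> - u t0 y0) - K * (\<xi> - y0)) has_real_derivative s * ux t0 L - K) (at L within {y0..L})"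
        using y0 by (intro dlin1 DERIV_subset[OF der(2)[OF t0in, of L]]) auto
      have "0 \<le> s * ux t0 L - K"
        by (rule max_at_right_end_deriv[OF d]) (use yx0' xL mx[OF t0] y0 in auto)
      then show False using bcu(2)[OF t0in] Kpos by simp
    qed
    have y00: "0 < y0"
    proof (rule ccontr)
      assume "\<not> 0 < y0" then have y0z: "y0 = 0" using y0 by auto
      have d: "((\<lambda>\<eta>. s * (u t0 x0 - u t0 \<eta>) - K * (x0 - \<eta>)) has_real_derivative K - s * ux t0 0) (at 0 within {0..x0})"
        using x0 by (intro dlin2 DERIV_subset[OF der(2)[OF t0in, of 0]]) auto
      have "K - s * ux t0 0 \<le> 0"
        by (rule max_at_left_end_deriv[OF d]) (use yx0' y0z mx[OF t0] x0 in auto)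
      then show False using bcu(1)[OF t0in] Kpos by simp
    qed
    define d where "d = min y0 (L - x0)"
    have dpos: "d > 0" using y00 x0L by (simp add: d_def)
    have inner: "\<And>e. \<bar>e\<bar> < d \<Longrightarrow> x0 + e \<in> {0<..<L} \<and> y0 + e \<in> {0<..<L}"
      using yx0' unfolding d_def by auto
    have sp: "(\<lambda>e. s * (u t0 (x0 + e) - u t0 (y0 + e))) 0 \<ge> 0 \<longrightarrow> True" by simp
    have loc: "(\<lambda>e. s * (ux t0 (x0 + e) - ux t0 (y0 + e))) 0 = 0 \<and> s * (uxx t0 (x0 + 0) - uxx t0 (y0 + 0)) \<le> 0"
    proof (rule local_max_second[OF dpos, where x=0 and g="\<lambda>e. s * (u t0 (x0 + e) - u t0 (y0 + e))" and gp="\<lambda>e. s * (ux t0 (x0 + e) - ux t0 (y0 + e))"])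
      fix e :: real assume e: "\<bar>e - 0\<bar> < d"
      then have ie: "x0 + e \<in> {0<..<L}" "y0 + e \<in> {0<..<L}" using inner by auto
      show "((\<lambda>e. s * (u t0 (x0 + e) - u t0 (y0 + e))) has_real_derivative s * (ux t0 (x0 + e) - ux t0 (y0 + e))) (at e)"
        by (intro dlin4 shift_deriv derx_int[OF t0in] ie)
      have "s * (u t0 (x0 + e) - u t0 (y0 + e)) - K * ((x0 + e) - (y0 + e)) \<le> M"
        using mx[OF t0, of "x0+e" "y0+e"] ie yx0 unfolding M_def by auto
      then show "s * (u t0 (x0 + e) - u t0 (y0 + e)) \<le> s * (u t0 (x0 + 0) - u t0 (y0 + 0))"
        unfolding M_def by simp
    next
      have ie: "x0 + 0 \<in> {0<..<L}" "y0 + 0 \<in> {0<..<L}" using inner[of 0] dpos by auto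
      show "((\<lambda>e. s * (ux t0 (x0 + e) - ux t0 (y0 + e))) has_real_derivative s * (uxx t0 (x0 + 0) - uxx t0 (y0 + 0))) (at 0)"
        by (intro dlin4 shift_deriv derx_int[OF t0in] ie)
    qed
    have uxeq: "ux t0 x0 = ux t0 y0" using loc s by auto
    have uxxle: "s * (uxx t0 x0 - uxx t0 y0) \<le> 0" using loc by simp
    have dt: "((\<lambda>\<tau>'. s * (u \<tau>' x0 - u \<tau>' y0) - K * (x0 - y0)) has_real_derivative s * (ut t0 x0 - ut t0 y0)) (at t0 within {t0..T})"
      by (intro dlin3 DERIV_subset[OF der(1)[OF t0in]]) (use x0 y0 tau t0 in auto)
    have utle: "s * (ut t0 x0 - ut t0 y0) \<le> 0"
      by (rule max_at_left_end_deriv[OF dt t0T]) (use mx x0 y0 yx0 t0 in auto)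
    have t0o: "t0 \<in> {0<..<T}" using t0 tau t0T by auto
    have x0o: "x0 \<in> {0<..<L}" and y0o: "y0 \<in> {0<..<L}" using y00 yx0' x0L by auto
    have geq: "Gfun \<epsilon> L ux m t0 x0 = Gfun \<epsilon> L ux m t0 y0" unfolding Gfun_def uxeq ..
    have e1: "ut t0 x0 + \<sigma>\<^sup>2 / 2 * uxx t0 x0 - r * u t0 x0 = ut t0 y0 + \<sigma>\<^sup>2 / 2 * uxx t0 y0 - r * u t0 y0"
      using hjb[OF t0o x0o] hjb[OF t0o y0o] unfolding geq by linarith
    have e2: "s * (ut t0 x0 - ut t0 y0) + \<sigma>\<^sup>2 / 2 * (s * (uxx t0 x0 - uxx t0 y0)) = r * (s * (u t0 x0 - u t0 y0))"
    proof -
      have "s * ((ut t0 x0 + \<sigma>\<^sup>2 / 2 * uxx t0 x0 - r * u t0 x0) - (ut t0 y0 + \<sigma>\<^sup>2 / 2 * uxx t0 y0 - r * u t0 y0)) = 0"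
        using e1 by simp
      then show ?thesis by (simp add: algebra_simps)
    qed
    have "\<sigma>\<^sup>2 / 2 * (s * (uxx t0 x0 - uxx t0 y0)) \<le> 0"
      using uxxle by (simp add: mult_nonneg_nonpos)
    then have "r * (s * (u t0 x0 - u t0 y0)) \<le> 0" using e2 utle by linarith
    moreover have "s * (u t0 x0 - u t0 y0) > 0" using Mpos yx0 Kpos unfolding M_def
      by (smt (verit) mult_nonneg_nonneg)
    ultimately show False using mult_pos_pos[OF r] by fastforce
  qed
  then show ?thesis using mx[OF t x y yx] unfolding M_def by linarith
qed

lemma lip:
  assumes t: "t \<in> {0<..T}" and x: "x \<in> {0..L}" and y: "y \<in> {0..L}"
  shows "\<bar>u t x - u t y\<bar> \<le> K * \<bar>x - y\<bar>"
proof -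
  define \<tau> where "\<tau> = min t (T/2)"
  have tau: "0 < \<tau>" "\<tau> < T" "t \<in> {\<tau>..T}" using t T by (auto simp: \<tau>_def)
  show ?thesis
  proof (cases "y \<le> x")
    case True
    show ?thesis using lip_dir[OF _ tau x y True, of 1] lip_dir[OF _ tau x y True, of "-1"] True by auto
  next
    case False
    then have yx: "x \<le> y" by simp
    show ?thesis using lip_dir[OF _ tau y x yx, of 1] lip_dir[OF _ tau y x yx, of "-1"] yx by auto
  qed
qed

lemma uxK:
  assumes t: "t \<in> {0<..T}" and x: "x \<in> {0..L}"
  shows "\<bar>ux t x\<bar> \<le> K"
proof (rule deriv_lip_bound[OF der(2) L x])
  show "t \<in> {0..T}" using t by auto
  show "x \<in> {0..L}" using x .
  fix y assume "y \<in> {0..L}" then show "\<bar>u t y - u t x\<bar> \<le> K * \<bar>y - x\<bar>" using lip[OF t _ x] by auto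
qed

lemma slice_x:
  assumes "continuous_on S (\<lambda>(t,x). f t x)" "t \<in> {0..T}"
  shows "continuous_on {0..L} (f t)"
proof -
  have "continuous_on {0..L} (\<lambda>y. (\<lambda>(t,x). f t x) (t, y))"
    by (rule continuous_on_compose2[OF assms(1)]) (use assms(2) in \<open>auto intro!: continuous_intros\<close>)
  then show ?thesis by simp
qed

lemma slice_t:
  assumes "continuous_on S (\<lambda>(t,x). f t x)" "x \<in> {0..L}"
  shows "continuous_on {0..T} (\<lambda>t. f t x)"
proof -
  have "continuous_on {0..T} (\<lambda>t. (\<lambda>(t,x). f t x) (t, x))"
    by (rule continuous_on_compose2[OF assms(1)]) (use assms(2) in \<open>auto intro!: continuous_intros\<close>)
  then show ?thesis by simp
qed

lemma compS: "compact S" by (intro compact_Times compact_Icc)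

lemma bcoef_ccoef: "0 < bcoef \<epsilon>" "bcoef \<epsilon> \<le> 1" "0 < ccoef \<epsilon>" "ccoef \<epsilon> \<le> 1"
  using eps unfolding bcoef_def ccoef_def by auto

lemma Gbound:
  assumes t: "t \<in> {0<..T}" and x: "x \<in> {0..L}"
    and J: "\<bar>integral {0..L} (\<lambda>y. ux t y * m t y)\<bar> \<le> J"
  shows "\<bar>Gfun \<epsilon> L ux m t x\<bar> \<le> (1 + J + K) / 2"
proof -
  define I where "I = integral {0..L} (\<lambda>y. ux t y * m t y)"
  have cI: "\<bar>ccoef \<epsilon> * I\<bar> \<le> J"
  proof -
    have "\<bar>ccoef \<epsilon> * I\<bar> = ccoef \<epsilon> * \<bar>I\<bar>" using bcoef_ccoef by (simp add: abs_mult)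
    also have "\<dots> \<le> 1 * \<bar>I\<bar>" by (rule mult_right_mono) (use bcoef_ccoef in auto)
    finally show ?thesis using J unfolding I_def by simp
  qed
  have "\<bar>bcoef \<epsilon> + ccoef \<epsilon> * I - ux t x\<bar> \<le> 1 + J + K"
    using cI uxK[OF t x] bcoef_ccoef by linarith
  then show ?thesis unfolding Gfun_def I_def[symmetric] by simp
qed

lemma Ibound_m:
  assumes t: "t \<in> {0<..T}" and Bm: "\<And>p. p \<in> S \<Longrightarrow> \<bar>(\<lambda>(t,x). m t x) p\<bar> \<le> Bm"
  shows "\<bar>integral {0..L} (\<lambda>y. ux t y * m t y)\<bar> \<le> K * Bm * L"
proof -
  have t': "t \<in> {0..T}" using t by auto
  have c: "continuous_on {0..L} (\<lambda>y. ux t y * m t y)"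
    by (intro continuous_intros slice_x[OF cont_ux t', simplified] slice_x[OF cont_m t', simplified])
  have "norm (integral {0..L} (\<lambda>y. ux t y * m t y)) \<le> (K * Bm) * (L - 0)"
  proof (rule integral_bound)
    show "0 \<le> L" using L by simp
    show "continuous_on {0..L} (\<lambda>y. ux t y * m t y)" by (rule c)
    fix y assume y: "y \<in> {0..L}"
    have "\<bar>m t y\<bar> \<le> Bm" using Bm[of "(t,y)"] t' y by auto
    moreover have "\<bar>ux t y\<bar> \<le> K" by (rule uxK[OF t y])
    ultimately show "norm (ux t y * m t y) \<le> K * Bm"
      by (simp add: abs_mult mult_mono')
  qed
  then show ?thesis by simp
qed

lemma m_nonneg_tau:
  assumes tau: "0 < \<tau>" "\<tau> < T" and t: "t \<in> {0..\<tau>}" and x: "x \<in> {0..L}"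
  shows "m t x \<ge> 0"
proof -
  obtain Bxx where Bxx: "Bxx > 0" "\<And>p. p \<in> S \<Longrightarrow> \<bar>(\<lambda>(t,x). uxx t x) p\<bar> \<le> Bxx"
    using cont_bound[OF cont_uxx compS] by blast
  obtain Bm where Bm: "Bm > 0" "\<And>p. p \<in> S \<Longrightarrow> \<bar>(\<lambda>(t,x). m t x) p\<bar> \<le> Bm"
    using cont_bound[OF cont_m compS] by blast
  define Mg where "Mg = (1 + K * Bm * L + K) / 2"
  have Mg: "Mg > 0" unfolding Mg_def using Kpos Bm L by (simp add: add_pos_nonneg)
  have Gb: "\<And>t x. t \<in> {0<..T} \<Longrightarrow> x \<in> {0..L} \<Longrightarrow> \<bar>Gfun \<epsilon> L ux m t x\<bar> \<le> Mg"
    unfolding Mg_def using Gbound Ibound_m Bm(2) by blast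
  have s2: "0 < \<sigma>\<^sup>2" "\<sigma>\<^sup>2 \<le> 1" using sig by (auto simp: power_le_one)
  define \<delta> where "\<delta> = L * \<sigma>\<^sup>2 / (2 * Mg + \<sigma>\<^sup>2)"
  have dpos: "\<delta> > 0" unfolding \<delta>_def using L s2 Mg by (intro divide_pos_pos mult_pos_pos add_pos_pos) auto
  have dMg: "\<delta> * Mg < \<sigma>\<^sup>2 * L / 2"
  proof -
    have den: "2 * Mg + \<sigma>\<^sup>2 > 0" using Mg s2(1) by linarith
    have pos4: "0 < \<sigma>\<^sup>2 * L * \<sigma>\<^sup>2" using L s2(1) by (intro mult_pos_pos)
    have ineq: "L * \<sigma>\<^sup>2 * Mg < \<sigma>\<^sup>2 * L / 2 * (2 * Mg + \<sigma>\<^sup>2)" using pos4 by (simp add: algebra_simps)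
    have "\<delta> * Mg = (L * \<sigma>\<^sup>2 * Mg) / (2 * Mg + \<sigma>\<^sup>2)" unfolding \<delta>_def by simp
    also have "\<dots> < \<sigma>\<^sup>2 * L / 2" using ineq by (simp add: pos_divide_less_eq[OF den])
    finally show ?thesis .
  qed
  define \<psi> where "\<psi> = (\<lambda>\<xi>::real. \<xi> * (L - \<xi>) + \<delta>)"
  define P where "P = L * L + \<delta>"
  have \<psi>b: "\<And>\<xi>. \<xi> \<in> {0..L} \<Longrightarrow> \<delta> \<le> \<psi> \<xi> \<and> \<psi> \<xi> \<le> P"
  proof -
    fix \<xi> :: real assume "\<xi> \<in> {0..L}"
    then have a: "0 \<le> \<xi>" "\<xi> \<le> L" "0 \<le> L - \<xi>" "L - \<xi> \<le> L" using L by auto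
    have "\<xi> * (L - \<xi>) \<le> L * L" by (rule mult_mono) (use a L in auto)
    moreover have "0 \<le> \<xi> * (L - \<xi>)" using a by simp
    ultimately show "\<delta> \<le> \<psi> \<xi> \<and> \<psi> \<xi> \<le> P" unfolding \<psi>_def P_def by simp
  qed
  have \<psi>'b: "\<And>\<xi>. \<xi> \<in> {0..L} \<Longrightarrow> \<bar>L - 2 * \<xi>\<bar> \<le> L" by auto
  have Ppos: "P > 0" unfolding P_def using dpos by (simp add: add_nonneg_pos)
  define Qmax where "Qmax = P + L * L + Bxx * P * P / 2 + Mg * P * L"
  define lam where "lam = (Qmax + 1) / (\<delta> * \<delta>)"
  have Qpos: "Qmax \<ge> 0" unfolding Qmax_def using Ppos Bxx Mg L by simp
  have lampos: "lam > 0" unfolding lam_def using Qpos dpos by simp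
  have lamd: "lam * (\<delta> * \<delta>) = Qmax + 1" unfolding lam_def using dpos by simp
  define Dm where "Dm = {0..\<tau>} \<times> {0..L}"
  define W where "W = (\<lambda>p::real\<times>real. exp (-(lam * fst p)) * \<psi> (snd p) * (\<lambda>(t,x). m t x) p)"
  have DmS: "Dm \<subseteq> S" unfolding Dm_def using tau by auto
  have cDm: "compact Dm" unfolding Dm_def by (intro compact_Times compact_Icc)
  have neDm: "Dm \<noteq> {}" using t x unfolding Dm_def by auto
  have cW: "continuous_on Dm W" unfolding W_def \<psi>_def
    by (intro continuous_intros continuous_on_subset[OF cont_m DmS])
  obtain p0 where p0: "p0 \<in> Dm" and pmin: "\<And>p. p \<in> Dm \<Longrightarrow> W p0 \<le> W p"
    using continuous_attains_inf[OF cDm neDm cW] by blast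
  obtain t0 x0 where p0e: "p0 = (t0, x0)" by (cases p0) auto
  have t0: "t0 \<in> {0..\<tau>}" and x0: "x0 \<in> {0..L}" using p0 unfolding p0e Dm_def by auto
  have mn: "\<And>t' x'. t' \<in> {0..\<tau>} \<Longrightarrow> x' \<in> {0..L} \<Longrightarrow>
      exp (-(lam * t0)) * \<psi> x0 * m t0 x0 \<le> exp (-(lam * t')) * \<psi> x' * m t' x'"
    using pmin unfolding p0e W_def Dm_def by auto
  have \<psi>pos: "\<And>\<xi>. \<xi> \<in> {0..L} \<Longrightarrow> \<psi> \<xi> > 0" using \<psi>b dpos by force
  have "0 \<le> exp (-(lam * t0)) * \<psi> x0 * m t0 x0"
  proof (rule ccontr)
    assume "\<not> 0 \<le> exp (-(lam * t0)) * \<psi> x0 * m t0 x0"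
    then have neg: "exp (-(lam * t0)) * \<psi> x0 * m t0 x0 < 0" by simp
    define e where "e = exp (-(lam * t0))"
    have epos: "e > 0" unfolding e_def by simp
    define a where "a = m t0 x0"
    have ep: "e * \<psi> x0 > 0" using epos \<psi>pos[OF x0] by simp
    have aneg: "a < 0" using neg ep \<psi>pos[OF x0] unfolding a_def e_def by (auto simp: mult_less_0_iff)
    have t0pos: "t0 > 0"
    proof (rule ccontr)
      assume "\<not> t0 > 0" then have "t0 = 0" using t0 by auto
      then have "a = m0 x0" unfolding a_def using init[OF x0] by simp
      then have "a \<ge> 0" using m0nn x0 by auto
      then show False using aneg by simp
    qed
    have t0in: "t0 \<in> {0..T}" and t0o: "t0 \<in> {0<..<T}" and t0c: "t0 \<in> {0<..T}" using t0 t0pos tau by auto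
    have mnx: "\<And>\<xi>. \<xi> \<in> {0..L} \<Longrightarrow> -(e * (\<xi> * (L - \<xi>) + \<delta>) * m t0 \<xi>) \<le> -(e * (x0 * (L - x0) + \<delta>) * m t0 x0)"
      using mn[OF t0] unfolding e_def \<psi>_def by auto
    have dt: "((\<lambda>t. -(exp (-(lam * t)) * \<psi> x0 * m t x0)) has_real_derivative -(\<psi> x0 * exp (-(lam * t0)) * (mt t0 x0 - lam * m t0 x0))) (at t0 within {0..t0})"
      by (rule dWt[OF DERIV_subset[OF der(4)[OF t0in x0]]]) (use t0 tau in auto)
    have "0 \<le> -(\<psi> x0 * exp (-(lam * t0)) * (mt t0 x0 - lam * m t0 x0))"
      by (rule max_at_right_end_deriv[OF dt t0pos]) (use mn x0 t0 in auto)
    then have "\<psi> x0 * e * (mt t0 x0 - lam * a) \<le> 0" unfolding e_def a_def by simp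
    then have "(e * \<psi> x0) * (mt t0 x0 - lam * a) \<le> 0" by (simp add: algebra_simps)
    then have mtle: "mt t0 x0 - lam * a \<le> 0" by (rule pos_mult_le0[OF ep])
    show False
    proof (cases "x0 = 0")
      case True
      have d: "((\<lambda>\<xi>. -(e * (\<xi> * (L - \<xi>) + \<delta>) * m t0 \<xi>)) has_real_derivative -(e * ((L - 2 * 0) * m t0 0 + (0 * (L - 0) + \<delta>) * mx t0 0))) (at 0 within {0..L})"
        by (rule dW1[OF der(5)[OF t0in]]) (use L in auto)
      have "-(e * ((L - 2 * 0) * m t0 0 + (0 * (L - 0) + \<delta>) * mx t0 0)) \<le> 0"
        by (rule max_at_left_end_deriv[OF d L]) (use mnx True in auto)
      then have "0 \<le> e * (L * a + \<delta> * mx t0 0)" using True unfolding a_def by simp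
      then have h1: "0 \<le> L * a + \<delta> * mx t0 0" by (rule pos_mult_ge0[OF epos])
      have bc: "\<sigma>\<^sup>2 / 2 * mx t0 0 = - (Gfun \<epsilon> L ux m t0 0 * a)" using bcm(1)[OF t0in] True unfolding a_def by simp
      have "0 \<le> \<sigma>\<^sup>2 / 2 * (L * a + \<delta> * mx t0 0)" using h1 s2 by simp
      also have "\<sigma>\<^sup>2 / 2 * (L * a + \<delta> * mx t0 0) = \<sigma>\<^sup>2 / 2 * L * a + \<delta> * (\<sigma>\<^sup>2 / 2 * mx t0 0)"
        by (simp add: algebra_simps)
      also have "\<dots> = a * (\<sigma>\<^sup>2 * L / 2 - \<delta> * Gfun \<epsilon> L ux m t0 0)" unfolding bc by (simp add: algebra_simps)
      finally have h2: "0 \<le> a * (\<sigma>\<^sup>2 * L / 2 - \<delta> * Gfun \<epsilon> L ux m t0 0)" .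
      have "\<delta> * Gfun \<epsilon> L ux m t0 0 \<le> \<delta> * Mg"
        using Gb[OF t0c, of 0] L dpos by (intro mult_left_mono) auto
      then have "\<sigma>\<^sup>2 * L / 2 - \<delta> * Gfun \<epsilon> L ux m t0 0 > 0" using dMg by linarith
      then have "a * (\<sigma>\<^sup>2 * L / 2 - \<delta> * Gfun \<epsilon> L ux m t0 0) < 0" using aneg by (simp add: mult_neg_pos)
      then show False using h2 by simp
    next
      case False
      show False
      proof (cases "x0 = L")
        case True
        have d: "((\<lambda>\<xi>. -(e * (\<xi> * (L - \<xi>) + \<delta>) * m t0 \<xi>)) has_real_derivative -(e * ((L - 2 * L) * m t0 L + (L * (L - L) + \<delta>) * mx t0 L))) (at L within {0..L})"
          by (rule dW1[OF der(5)[OF t0in]]) (use L in auto)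
        have "0 \<le> -(e * ((L - 2 * L) * m t0 L + (L * (L - L) + \<delta>) * mx t0 L))"
          by (rule max_at_right_end_deriv[OF d L]) (use mnx True in auto)
        then have "e * (-L * a + \<delta> * mx t0 L) \<le> 0" using True unfolding a_def by simp
        then have h1: "-L * a + \<delta> * mx t0 L \<le> 0" by (rule pos_mult_le0[OF epos])
        have bc: "\<sigma>\<^sup>2 / 2 * mx t0 L = - (Gfun \<epsilon> L ux m t0 L * a)" using bcm(2)[OF t0in] True unfolding a_def by simp
        have "\<sigma>\<^sup>2 / 2 * (-L * a + \<delta> * mx t0 L) \<le> 0" using h1 s2 by (simp add: mult_nonneg_nonpos)
        moreover have "\<sigma>\<^sup>2 / 2 * (-L * a + \<delta> * mx t0 L) = -\<sigma>\<^sup>2 / 2 * L * a + \<delta> * (\<sigma>\<^sup>2 / 2 * mx t0 L)"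
          by (simp add: field_simps)
        moreover have "\<dots> = (-a) * (\<sigma>\<^sup>2 * L / 2 + \<delta> * Gfun \<epsilon> L ux m t0 L)" unfolding bc by (simp add: algebra_simps)
        ultimately have h2: "(-a) * (\<sigma>\<^sup>2 * L / 2 + \<delta> * Gfun \<epsilon> L ux m t0 L) \<le> 0" by simp
        have "-(\<delta> * Gfun \<epsilon> L ux m t0 L) \<le> \<delta> * Mg"
        proof -
          have "-(Gfun \<epsilon> L ux m t0 L) \<le> Mg" using Gb[OF t0c, of L] L by auto
          then have "\<delta> * (-(Gfun \<epsilon> L ux m t0 L)) \<le> \<delta> * Mg" using dpos by (intro mult_left_mono) auto
          then show ?thesis by simp
        qed
        then have "\<sigma>\<^sup>2 * L / 2 + \<delta> * Gfun \<epsilon> L ux m t0 L > 0" using dMg by linarith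
        then have "(-a) * (\<sigma>\<^sup>2 * L / 2 + \<delta> * Gfun \<epsilon> L ux m t0 L) > 0" using aneg by (intro mult_pos_pos) auto
        then show False using h2 by simp
      next
        case False
        then have x0o: "x0 \<in> {0<..<L}" using x0 \<open>x0 \<noteq> 0\<close> by auto
        define d where "d = min x0 (L - x0)"
        have dpos': "d > 0" using x0o unfolding d_def by auto
        have inner: "\<And>\<xi>. \<bar>\<xi> - x0\<bar> < d \<Longrightarrow> \<xi> \<in> {0<..<L}" unfolding d_def by auto
        have loc: "(\<lambda>\<xi>. -(e * ((L - 2 * \<xi>) * m t0 \<xi> + (\<xi> * (L - \<xi>) + \<delta>) * mx t0 \<xi>))) x0 = 0 \<and>
            -(e * (-2 * m t0 x0 + (L - 2 * x0) * mx t0 x0 + (L - 2 * x0) * mx t0 x0 + (x0 * (L - x0) + \<delta>) * mxx t0 x0)) \<le> 0"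
        proof (rule local_max_second[OF dpos', where x=x0 and g="\<lambda>\<xi>. -(e * (\<xi> * (L - \<xi>) + \<delta>) * m t0 \<xi>)"])
          fix \<xi> assume "\<bar>\<xi> - x0\<bar> < d"
          then have \<xi>: "\<xi> \<in> {0<..<L}" by (rule inner)
          show "((\<lambda>\<xi>. -(e * (\<xi> * (L - \<xi>) + \<delta>) * m t0 \<xi>)) has_real_derivative
              -(e * ((L - 2 * \<xi>) * m t0 \<xi> + (\<xi> * (L - \<xi>) + \<delta>) * mx t0 \<xi>))) (at \<xi>)"
            by (rule dW1[OF derx_int(3)[OF t0in \<xi>]])
          show "-(e * (\<xi> * (L - \<xi>) + \<delta>) * m t0 \<xi>) \<le> -(e * (x0 * (L - x0) + \<delta>) * m t0 x0)"
            using mnx \<xi> by auto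
        next
          show "((\<lambda>\<xi>. -(e * ((L - 2 * \<xi>) * m t0 \<xi> + (\<xi> * (L - \<xi>) + \<delta>) * mx t0 \<xi>))) has_real_derivative
            -(e * (-2 * m t0 x0 + (L - 2 * x0) * mx t0 x0 + (L - 2 * x0) * mx t0 x0 + (x0 * (L - x0) + \<delta>) * mxx t0 x0))) (at x0)"
            by (rule dW2[OF derx_int(3)[OF t0in x0o] derx_int(4)[OF t0in x0o]])
        qed
        define P0 where "P0 = \<psi> x0"
        define P1 where "P1 = L - 2 * x0"
        define w where "w = mt t0 x0"
        define p where "p = mx t0 x0"
        define q where "q = mxx t0 x0"
        define h where "h = uxx t0 x0"
        define g where "g = Gfun \<epsilon> L ux m t0 x0"
        have P0: "\<delta> \<le> P0" "P0 \<le> P" "P0 > 0" using \<psi>b[OF x0] \<psi>pos[OF x0] unfolding P0_def by auto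
        have f1: "P1 * a + P0 * p = 0" using loc epos unfolding P0_def P1_def a_def p_def \<psi>_def by simp
        have f2: "-2 * a + 2 * P1 * p + P0 * q \<ge> 0"
        proof -
          have "-(e * (-2 * a + 2 * P1 * p + P0 * q)) \<le> 0" using loc
            unfolding P0_def P1_def a_def p_def q_def \<psi>_def by (simp add: algebra_simps)
          then have "0 \<le> e * (-2 * a + 2 * P1 * p + P0 * q)" by simp
          then show ?thesis by (rule pos_mult_ge0[OF epos])
        qed
        have f3: "w - lam * a \<le> 0" using mtle unfolding w_def .
        have f4: "w - \<sigma>\<^sup>2 / 2 * q = - h / 2 * a + g * p"
        proof -
          define c0 where "c0 = bcoef \<epsilon> + ccoef \<epsilon> * integral {0..L} (\<lambda>y. ux t0 y * m t0 y)"
          have gf: "(\<lambda>y. Gfun \<epsilon> L ux m t0 y * m t0 y) = (\<lambda>y. (c0 - ux t0 y) / 2 * m t0 y)"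
            unfolding Gfun_def c0_def by simp
          have d1: "((\<lambda>y. (c0 - ux t0 y) / 2 * m t0 y) has_real_derivative (- uxx t0 x0 / 2 * m t0 x0 + (c0 - ux t0 x0) / 2 * mx t0 x0)) (at x0)"
            by (rule dGm[OF derx_int(2)[OF t0in x0o] derx_int(3)[OF t0in x0o]])
          have "mt t0 x0 - \<sigma>\<^sup>2 / 2 * mxx t0 x0 = - uxx t0 x0 / 2 * m t0 x0 + (c0 - ux t0 x0) / 2 * mx t0 x0"
            using DERIV_unique[OF fp[OF t0o x0o, unfolded gf] d1] .
          moreover have "g = (c0 - ux t0 x0) / 2" unfolding g_def Gfun_def c0_def by simp
          ultimately show ?thesis unfolding w_def q_def h_def a_def p_def by simp
        qed
        define Q where "Q = \<sigma>\<^sup>2 * P0 + \<sigma>\<^sup>2 * (P1 * P1) - h * (P0 * P0) / 2 - g * P0 * P1"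
        have key1: "P0 * q \<ge> 2 * a - 2 * P1 * p" using f2 by linarith
        have key2: "\<sigma>\<^sup>2 / 2 * P0 * (P0 * q) \<ge> \<sigma>\<^sup>2 / 2 * P0 * (2 * a - 2 * P1 * p)"
          using key1 s2 P0 by (intro mult_left_mono) auto
        have pe: "P0 * p = - (P1 * a)" using f1 by linarith
        have e1: "P0 * P0 * w = \<sigma>\<^sup>2 / 2 * P0 * (P0 * q) - h / 2 * (P0 * P0) * a + g * P0 * (P0 * p)"
        proof -
          have wq: "w = \<sigma>\<^sup>2 / 2 * q - h / 2 * a + g * p" using f4 by linarith
          show ?thesis unfolding wq by (simp add: algebra_simps)
        qed
        have e2: "\<sigma>\<^sup>2 / 2 * P0 * (2 * a - 2 * P1 * p) = \<sigma>\<^sup>2 * P0 * a - \<sigma>\<^sup>2 * P1 * (P0 * p)"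
          by (simp add: algebra_simps)
        have lb: "P0 * P0 * w \<ge> a * Q"
        proof -
          have "P0 * P0 * w \<ge> \<sigma>\<^sup>2 * P0 * a - \<sigma>\<^sup>2 * P1 * (P0 * p) - h / 2 * (P0 * P0) * a + g * P0 * (P0 * p)"
            using e1 e2 key2 by linarith
          also have "\<sigma>\<^sup>2 * P0 * a - \<sigma>\<^sup>2 * P1 * (P0 * p) - h / 2 * (P0 * P0) * a + g * P0 * (P0 * p) = a * Q"
            unfolding pe Q_def by (simp add: algebra_simps)
          finally show ?thesis .
        qed
        have ub: "P0 * P0 * w \<le> P0 * P0 * (lam * a)"
          using f3 by (intro mult_left_mono) auto
        have "a * Q \<le> a * (lam * (P0 * P0))" using lb ub by (simp add: algebra_simps)
        then have QP: "lam * (P0 * P0) \<le> Q" using aneg by (simp add: mult_le_cancel_left)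
        have t1: "\<sigma>\<^sup>2 * P0 \<le> P"
        proof -
          have "\<sigma>\<^sup>2 * P0 \<le> 1 * P0" using s2 P0 by (intro mult_right_mono) auto
          then show ?thesis using P0 by linarith
        qed
        have t2: "\<sigma>\<^sup>2 * (P1 * P1) \<le> L * L"
        proof -
          have "\<bar>P1\<bar> \<le> L" unfolding P1_def using \<psi>'b[OF x0] .
          then have "P1 * P1 \<le> L * L" by (metis abs_ge_zero abs_mult_self_eq mult_mono')
          moreover have "\<sigma>\<^sup>2 * (P1 * P1) \<le> 1 * (P1 * P1)" using s2 by (intro mult_right_mono) auto
          ultimately show ?thesis by linarith
        qed
        have t3: "- h * (P0 * P0) / 2 \<le> Bxx * P * P / 2"
        proof -
          have hb: "\<bar>h\<bar> \<le> Bxx" using Bxx(2)[of "(t0, x0)"] t0in x0 unfolding h_def by auto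
          have pp: "P0 * P0 \<le> P * P" using P0 by (intro mult_mono) auto
          have "\<bar>h\<bar> * (P0 * P0) \<le> Bxx * (P * P)"
            by (rule mult_mono[OF hb pp]) (use Bxx P0 in auto)
          moreover have "- h * (P0 * P0) \<le> \<bar>h\<bar> * (P0 * P0)" by (intro mult_right_mono) auto
          ultimately show ?thesis by simp
        qed
        have t4: "- g * P0 * P1 \<le> Mg * P * L"
        proof -
          have gb: "\<bar>g\<bar> \<le> Mg" unfolding g_def by (rule Gb[OF t0c x0])
          have gp: "\<bar>g\<bar> * P0 \<le> Mg * P" by (rule mult_mono[OF gb]) (use P0 Mg in auto)
          have p1: "\<bar>P1\<bar> \<le> L" unfolding P1_def using \<psi>'b[OF x0] .
          have "\<bar>g\<bar> * P0 * \<bar>P1\<bar> \<le> Mg * P * L"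
            by (rule mult_mono[OF gp p1]) (use Mg Ppos P0 in auto)
          moreover have "- g * P0 * P1 \<le> \<bar>g\<bar> * P0 * \<bar>P1\<bar>"
          proof -
            have "- g * P0 * P1 \<le> \<bar>- g * P0 * P1\<bar>" by (rule abs_ge_self)
            also have "\<dots> = \<bar>g\<bar> * P0 * \<bar>P1\<bar>" using P0 by (simp add: abs_mult)
            finally show ?thesis .
          qed
          ultimately show ?thesis by simp
        qed
        have "Q \<le> Qmax" unfolding Q_def Qmax_def using t1 t2 t3 t4 by (simp add: algebra_simps)
        moreover have "lam * (\<delta> * \<delta>) \<le> lam * (P0 * P0)"
          using P0 dpos lampos by (intro mult_left_mono mult_mono) auto
        ultimately show False using QP lamd by linarith
      qed
    qed
  qed
  moreover have "exp (-(lam * t0)) * \<psi> x0 * m t0 x0 \<le> exp (-(lam * t)) * \<psi> x * m t x" by (rule mn[OF t x])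
  ultimately have "0 \<le> exp (-(lam * t)) * \<psi> x * m t x" by linarith
  moreover have "exp (-(lam * t)) * \<psi> x > 0" using \<psi>pos[OF x] by simp
  ultimately show ?thesis by (simp add: zero_le_mult_iff)
qed

lemma m_nonneg:
  assumes t: "t \<in> {0..<T}" and x: "x \<in> {0..L}"
  shows "m t x \<ge> 0"
proof -
  define \<tau> where "\<tau> = max t (T/2)"
  show ?thesis by (rule m_nonneg_tau[of \<tau>]) (use t x T in \<open>auto simp: \<tau>_def\<close>)
qed

lemma slice_int:
  fixes f :: "real \<Rightarrow> real \<Rightarrow> real"
  assumes "continuous_on S (\<lambda>(t,x). f t x)" "t \<in> {0..T}"
  shows "f t integrable_on {0..L}"
  using integrable_continuous_real[OF slice_x[OF assms]] .

lemma mass_deriv: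
  assumes t: "t \<in> {0..T}"
  shows "((\<lambda>t. integral {0..L} (m t)) has_real_derivative integral {0..L} (mt t)) (at t within {0..T})"
proof -
  have "((\<lambda>t. integral (cbox 0 L) (m t)) has_real_derivative integral (cbox 0 L) (mt t)) (at t within {0..T})"
  proof (rule leibniz_rule_field_derivative)
    fix s y assume "s \<in> {0..T}" "y \<in> cbox 0 L"
    then show "((\<lambda>s. m s y) has_real_derivative mt s y) (at s within {0..T})" using der(4) by auto
  next
    fix s assume "s \<in> {0..T}" then show "m s integrable_on cbox 0 L" using slice_int[OF cont_m] by auto
  next
    show "continuous_on ({0..T} \<times> cbox 0 L) (\<lambda>(x, t). mt x t)" using cont_mt by simp
  qed (use t in auto)
  then show ?thesis by simp
qed

lemma mt_int_zero:
  assumes t: "t \<in> {0<..<T}"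
  shows "integral {0..L} (mt t) = 0"
proof -
  have t': "t \<in> {0..T}" using t by auto
  define GM where "GM = (\<lambda>y. Gfun \<epsilon> L ux m t y * m t y)"
  have cGM: "continuous_on {0..L} GM" unfolding GM_def Gfun_def
    by (intro continuous_intros slice_x[OF cont_ux t', simplified] slice_x[OF cont_m t', simplified]) auto
  have i1: "((\<lambda>y. mt t y - \<sigma>\<^sup>2 / 2 * mxx t y) has_integral (GM L - GM 0)) {0..L}"
  proof (rule fundamental_theorem_of_calculus_interior)
    show "0 \<le> L" using L by simp
    show "continuous_on {0..L} GM" by (rule cGM)
    fix y assume "y \<in> {0<..<L}"
    then show "(GM has_vector_derivative mt t y - \<sigma>\<^sup>2 / 2 * mxx t y) (at y)"
      unfolding GM_def has_real_derivative_iff_has_vector_derivative[symmetric] by (rule fp[OF t])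
  qed
  have i2: "(mxx t has_integral (mx t L - mx t 0)) {0..L}"
  proof (rule fundamental_theorem_of_calculus)
    show "0 \<le> L" using L by simp
    fix y assume "y \<in> {0..L}"
    then show "(mx t has_vector_derivative mxx t y) (at y within {0..L})"
      unfolding has_real_derivative_iff_has_vector_derivative[symmetric] using der(6)[OF t'] by simp
  qed
  have "((\<lambda>y. (mt t y - \<sigma>\<^sup>2 / 2 * mxx t y) + \<sigma>\<^sup>2 / 2 * mxx t y) has_integral
      ((GM L - GM 0) + \<sigma>\<^sup>2 / 2 * (mx t L - mx t 0))) {0..L}"
    by (intro has_integral_add i1 has_integral_mult_right i2)
  moreover have "(GM L - GM 0) + \<sigma>\<^sup>2 / 2 * (mx t L - mx t 0) = 0"
    using bcm[OF t'] unfolding GM_def by (simp add: field_simps)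
  ultimately have "(mt t has_integral 0) {0..L}" by simp
  then show ?thesis by (rule integral_unique)
qed

lemma mass:
  assumes t: "t \<in> {0..<T}"
  shows "integral {0..L} (m t) = 1"
proof -
  define F where "F = (\<lambda>t. integral {0..L} (m t))"
  have F0: "F 0 = 1" unfolding F_def using m0int init by (metis (no_types, lifting) integral_cong)
  show ?thesis
  proof (cases "t = 0")
    case True then show ?thesis using F0 unfolding F_def by simp
  next
    case False
    then have tp: "0 < t" using t by auto
    have cF: "continuous_on {0..T} F" unfolding F_def
      using integral_continuous_on_param[of "{0..T}" 0 L m] cont_m by simp
    have "continuous_on {0..t} F" by (rule continuous_on_subset[OF cF]) (use t in auto)
    moreover have "\<And>z. 0 < z \<Longrightarrow> z < t \<Longrightarrow> (F has_real_derivative 0) (at z)"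
    proof -
      fix z assume z: "0 < z" "z < t"
      then have zo: "z \<in> {0<..<T}" using t by auto
      have "(F has_real_derivative integral {0..L} (mt z)) (at z within {0..T})"
        unfolding F_def by (rule mass_deriv) (use zo in auto)
      then have "(F has_real_derivative integral {0..L} (mt z)) (at z)"
        using at_within_Icc_at[of 0 z T] zo by auto
      then show "(F has_real_derivative 0) (at z)" using mt_int_zero[OF zo] by simp
    qed
    ultimately obtain l z where "0 < z" "z < t" "(F has_real_derivative l) (at z)" "F t - F 0 = (t - 0) * l"
      using MVT[OF tp, of F] real_differentiable_def by blast
    moreover have "l = 0" using DERIV_unique calculation \<open>\<And>z. 0 < z \<Longrightarrow> z < t \<Longrightarrow> (F has_real_derivative 0) (at z)\<close> by blast
    ultimately show ?thesis using F0 unfolding F_def by simp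
  qed
qed

lemma Abound:
  assumes t: "t \<in> {0<..<T}"
  shows "\<bar>integral {0..L} (\<lambda>y. ux t y * m t y)\<bar> \<le> K"
proof -
  have t': "t \<in> {0..T}" "t \<in> {0..<T}" "t \<in> {0<..T}" using t by auto
  have "norm (integral {0..L} (\<lambda>y. ux t y * m t y)) \<le> integral {0..L} (\<lambda>y. K * m t y)"
  proof (rule Henstock_Kurzweil_Integration.integral_norm_bound_integral)
    show "(\<lambda>y. ux t y * m t y) integrable_on {0..L}"
      by (intro integrable_continuous_real continuous_intros slice_x[OF cont_ux t'(1), simplified] slice_x[OF cont_m t'(1), simplified])
    show "(\<lambda>y. K * m t y) integrable_on {0..L}"
      by (intro integrable_continuous_real continuous_intros slice_x[OF cont_m t'(1), simplified])
    fix y assume y: "y \<in> {0..L}"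
    have "\<bar>ux t y\<bar> \<le> K" by (rule uxK[OF t'(3) y])
    moreover have "m t y \<ge> 0" by (rule m_nonneg[OF t'(2) y])
    ultimately show "norm (ux t y * m t y) \<le> K * m t y" by (simp add: abs_mult mult_right_mono)
  qed
  also have "\<dots> = K * integral {0..L} (m t)" by simp
  also have "\<dots> = K" using mass[OF t'(2)] by simp
  finally show ?thesis by simp
qed

definition "M0 = (1 + 2 * K) / 2"

lemma Gbound0:
  assumes t: "t \<in> {0<..<T}" and x: "x \<in> {0..L}"
  shows "\<bar>Gfun \<epsilon> L ux m t x\<bar> \<le> M0"
  using Gbound[OF _ x Abound[OF t]] t unfolding M0_def by auto

definition "E t = integral {0..L} (\<lambda>x. (ux t x)\<^sup>2)"
definition "Phi t = integral {0..L} (\<lambda>x. - uxx t x * ut t x)"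

lemma cont_E: "continuous_on {0..T} E"
proof -
  have "continuous_on ({0..T} \<times> cbox 0 L) (\<lambda>(t,x). (ux t x)\<^sup>2)"
    using continuous_on_power[OF cont_ux, of 2] by (simp add: case_prod_beta)
  then show ?thesis unfolding E_def using integral_continuous_on_param[of "{0..T}" 0 L "\<lambda>t x. (ux t x)\<^sup>2"] by simp
qed

lemma cont_Phi: "continuous_on {0..T} Phi"
proof -
  have "continuous_on ({0..T} \<times> cbox 0 L) (\<lambda>(t,x). - uxx t x * ut t x)"
    using continuous_on_mult[OF continuous_on_minus[OF cont_uxx] cont_ut] by (simp add: case_prod_beta)
  then show ?thesis unfolding Phi_def using integral_continuous_on_param[of "{0..T}" 0 L "\<lambda>t x. - uxx t x * ut t x"] by simp
qed

lemma E_bounds: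
  assumes t: "t \<in> {0<..T}"
  shows "0 \<le> E t" "E t \<le> L * (K * K)"
proof -
  have t': "t \<in> {0..T}" using t by auto
  have int: "(\<lambda>x. (ux t x)\<^sup>2) integrable_on {0..L}"
    by (intro integrable_continuous_real continuous_intros slice_x[OF cont_ux t', simplified])
  show "0 \<le> E t" unfolding E_def by (rule integral_nonneg[OF int]) auto
  have "E t \<le> integral {0..L} (\<lambda>x. K * K)" unfolding E_def
  proof (rule integral_le[OF int])
    fix x assume x: "x \<in> {0..L}"
    have "\<bar>ux t x\<bar> \<le> K" by (rule uxK[OF t x])
    then have "\<bar>ux t x\<bar> * \<bar>ux t x\<bar> \<le> K * K" by (intro mult_mono) auto
    then show "(ux t x)\<^sup>2 \<le> K * K" by (simp add: power2_eq_square abs_mult_self_eq)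
  qed auto
  also have "\<dots> = L * (K * K)" using L by simp
  finally show "E t \<le> L * (K * K)" .
qed

lemma ibp:
  assumes t: "t \<in> {0..T}" and s: "s \<in> {0..T}"
  shows "- integral {0..L} (\<lambda>x. uxx t x * (u s x - u t x)) \<le> (E s - E t) / 2"
proof -
  define f where "f = (\<lambda>x. ux t x * (u s x - u t x))"
  define f' where "f' = (\<lambda>x. uxx t x * (u s x - u t x) + ux t x * (ux s x - ux t x))"
  have "(f' has_integral (f L - f 0)) {0..L}"
  proof (rule fundamental_theorem_of_calculus)
    show "0 \<le> L" using L by simp
    fix x assume x: "x \<in> {0..L}"
    have "(f has_real_derivative uxx t x * (u s x - u t x) + (ux s x - ux t x) * ux t x) (at x within {0..L})"
      unfolding f_def using DERIV_mult[OF der(3)[OF t x] DERIV_diff[OF der(2)[OF s x] der(2)[OF t x]]] by simp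
    then have "(f has_real_derivative f' x) (at x within {0..L})" by (simp add: f'_def algebra_simps)
    then show "(f has_vector_derivative f' x) (at x within {0..L})"
      by (simp add: has_real_derivative_iff_has_vector_derivative)
  qed
  moreover have "f L - f 0 = 0" unfolding f_def using bcu[OF t] by simp
  ultimately have hi: "(f' has_integral 0) {0..L}" by simp
  have c1: "continuous_on {0..L} (\<lambda>x. uxx t x * (u s x - u t x))"
    by (intro continuous_intros slice_x[OF cont_uxx t, simplified] slice_x[OF cont_u t, simplified] slice_x[OF cont_u s, simplified])
  have c2: "continuous_on {0..L} (\<lambda>x. ux t x * (ux s x - ux t x))"
    by (intro continuous_intros slice_x[OF cont_ux t, simplified] slice_x[OF cont_ux s, simplified])
  have i1: "(\<lambda>x. uxx t x * (u s x - u t x)) integrable_on {0..L}" by (rule integrable_continuous_real[OF c1])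
  have i2: "(\<lambda>x. ux t x * (ux s x - ux t x)) integrable_on {0..L}" by (rule integrable_continuous_real[OF c2])
  have "integral {0..L} f' = integral {0..L} (\<lambda>x. uxx t x * (u s x - u t x)) + integral {0..L} (\<lambda>x. ux t x * (ux s x - ux t x))"
    unfolding f'_def by (rule integral_add[OF i1 i2])
  then have eq: "- integral {0..L} (\<lambda>x. uxx t x * (u s x - u t x)) = integral {0..L} (\<lambda>x. ux t x * (ux s x - ux t x))"
    using integral_unique[OF hi] by simp
  have is1: "(\<lambda>x. (ux s x)\<^sup>2) integrable_on {0..L}"
    by (intro integrable_continuous_real continuous_intros slice_x[OF cont_ux s, simplified])
  have is2: "(\<lambda>x. (ux t x)\<^sup>2) integrable_on {0..L}"
    by (intro integrable_continuous_real continuous_intros slice_x[OF cont_ux t, simplified])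
  have "integral {0..L} (\<lambda>x. ux t x * (ux s x - ux t x)) \<le> integral {0..L} (\<lambda>x. ((ux s x)\<^sup>2 - (ux t x)\<^sup>2) / 2)"
  proof (rule integral_le[OF i2])
    show "(\<lambda>x. ((ux s x)\<^sup>2 - (ux t x)\<^sup>2) / 2) integrable_on {0..L}"
      by (intro integrable_continuous_real continuous_intros slice_x[OF cont_ux s, simplified] slice_x[OF cont_ux t, simplified]) auto
    fix x
    have "0 \<le> (ux s x - ux t x)\<^sup>2" by simp
    then show "ux t x * (ux s x - ux t x) \<le> ((ux s x)\<^sup>2 - (ux t x)\<^sup>2) / 2"
      by (simp add: power2_eq_square algebra_simps)
  qed
  also have "\<dots> = (E s - E t) / 2" unfolding E_def
    by (simp add: integral_diff[OF is1 is2])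
  finally show ?thesis using eq by simp
qed

lemma unif_dq:
  assumes e: "e > 0"
  obtains d where "d > 0" "\<And>h t x. 0 < h \<Longrightarrow> h < d \<Longrightarrow> t \<in> {0..T-h} \<Longrightarrow> x \<in> {0..L} \<Longrightarrow>
     \<bar>(u (t + h) x - u t x) / h - ut t x\<bar> \<le> e"
proof -
  have "uniformly_continuous_on S (\<lambda>(t,x). ut t x)"
    by (rule compact_uniformly_continuous[OF cont_ut compS])
  then obtain d where d: "d > 0" and hd: "\<And>p p'. p \<in> S \<Longrightarrow> p' \<in> S \<Longrightarrow> dist p' p < d \<Longrightarrow>
      dist ((\<lambda>(t,x). ut t x) p') ((\<lambda>(t,x). ut t x) p) < e"
    unfolding uniformly_continuous_on_def using e by metis
  show ?thesis
  proof (rule that[OF d])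
    fix h t x assume h: "0 < h" "h < d" and t: "t \<in> {0..T-h}" and x: "x \<in> {0..L}"
    have th: "t < t + h" using h by simp
    have c: "continuous_on {t..t+h} (\<lambda>s. u s x)"
      by (rule continuous_on_subset[OF slice_t[OF cont_u x]]) (use t h in auto)
    have dif: "\<And>z. t < z \<Longrightarrow> z < t + h \<Longrightarrow> (\<lambda>s. u s x) differentiable (at z)"
    proof -
      fix z assume z: "t < z" "z < t + h"
      then have zo: "0 < z" "z < T" using t h by auto
      have "((\<lambda>s. u s x) has_real_derivative ut z x) (at z within {0..T})" by (rule der(1)) (use zo x in auto)
      then have "((\<lambda>s. u s x) has_real_derivative ut z x) (at z)" using at_within_Icc_at[of 0 z T] zo by simp
      then show "(\<lambda>s. u s x) differentiable (at z)" using real_differentiable_def by blast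
    qed
    obtain l z where z: "t < z" "z < t + h" and dz: "((\<lambda>s. u s x) has_real_derivative l) (at z)"
      and eq: "u (t + h) x - u t x = (t + h - t) * l"
      using MVT[OF th c dif] by blast
    have zo: "0 < z" "z < T" using z t h by auto
    have "((\<lambda>s. u s x) has_real_derivative ut z x) (at z within {0..T})" by (rule der(1)) (use zo x in auto)
    then have "((\<lambda>s. u s x) has_real_derivative ut z x) (at z)" using at_within_Icc_at[of 0 z T] zo by simp
    then have l: "l = ut z x" using DERIV_unique[OF dz] by blast
    have "(u (t + h) x - u t x) / h = ut z x" using eq l h by simp
    moreover have "dist (z, x) (t, x) < d" using z h by (simp add: dist_Pair_Pair dist_real_def)
    then have "dist (ut z x) (ut t x) < e" using hd[of "(t,x)" "(z,x)"] t x z h zo by auto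
    ultimately show "\<bar>(u (t + h) x - u t x) / h - ut t x\<bar> \<le> e" by (simp add: dist_real_def)
  qed
qed

lemma cont_int:
  fixes f :: "real \<Rightarrow> real"
  assumes "continuous_on {0..T} f" "0 \<le> a" "b \<le> T"
  shows "f integrable_on {a..b}"
  by (rule integrable_continuous_real, rule continuous_on_subset[OF assms(1)]) (use assms in auto)

lemma energy_key: "integral {0..T} Phi \<le> L * (K * K) / 2"
proof (rule field_le_epsilon)
  fix e :: real assume e: "0 < e"
  obtain Bxx where Bxx: "Bxx > 0" "\<And>p. p \<in> S \<Longrightarrow> \<bar>(\<lambda>(t,x). uxx t x) p\<bar> \<le> Bxx"
    using cont_bound[OF cont_uxx compS] by blast
  obtain But where But: "But > 0" "\<And>p. p \<in> S \<Longrightarrow> \<bar>(\<lambda>(t,x). ut t x) p\<bar> \<le> But"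
    using cont_bound[OF cont_ut compS] by blast
  have Bxx': "\<And>t x. t \<in> {0..T} \<Longrightarrow> x \<in> {0..L} \<Longrightarrow> \<bar>uxx t x\<bar> \<le> Bxx" using Bxx(2) by auto
  have But': "\<And>t x. t \<in> {0..T} \<Longrightarrow> x \<in> {0..L} \<Longrightarrow> \<bar>ut t x\<bar> \<le> But" using But(2) by auto
  define C1 where "C1 = T * L * Bxx + 1"
  have C1: "C1 > 0" unfolding C1_def using T L Bxx by (simp add: add_pos_nonneg)
  define \<epsilon>' where "\<epsilon>' = e / (2 * C1)"
  have epos: "\<epsilon>' > 0" unfolding \<epsilon>'_def using e C1 by simp
  obtain d where d: "d > 0" and hd: "\<And>h t x. 0 < h \<Longrightarrow> h < d \<Longrightarrow> t \<in> {0..T-h} \<Longrightarrow> x \<in> {0..L} \<Longrightarrow>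
     \<bar>(u (t + h) x - u t x) / h - ut t x\<bar> \<le> \<epsilon>'"
    using unif_dq[OF epos] by blast
  define C2 where "C2 = L * Bxx * But + 1"
  have C2: "C2 > 0" unfolding C2_def using L Bxx But by (simp add: add_pos_nonneg)
  define h where "h = min (min d (T/2)) (e / (2 * C2)) / 2"
  have hpos: "h > 0" unfolding h_def using d T e C2 by simp
  have m1: "min (min d (T/2)) (e / (2 * C2)) \<le> e / (2 * C2)" "min (min d (T/2)) (e / (2 * C2)) \<le> d"
     "min (min d (T/2)) (e / (2 * C2)) \<le> T / 2" by auto
  have hd': "h < d" "h \<le> T / 2" "h \<le> e / (2 * C2)" using m1 hpos unfolding h_def by linarith+
  have hT: "h \<le> T - h" "h < T" using hd' hpos by auto
  have pa: "Phi t \<le> (E (t + h) - E t) / (2 * h) + L * Bxx * \<epsilon>'" if t: "t \<in> {0..T-h}" for t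
  proof -
    have t': "t \<in> {0..T}" "t + h \<in> {0..T}" using t hpos by auto
    have ci: "(\<lambda>x. - uxx t x * ut t x) integrable_on {0..L}"
      by (intro integrable_continuous_real continuous_intros slice_x[OF cont_uxx t'(1), simplified] slice_x[OF cont_ut t'(1), simplified])
    have ci1: "(\<lambda>x. uxx t x * (u (t + h) x - u t x)) integrable_on {0..L}"
      by (intro integrable_continuous_real continuous_intros slice_x[OF cont_uxx t'(1), simplified]
          slice_x[OF cont_u t'(1), simplified] slice_x[OF cont_u t'(2), simplified])
    have ci2: "(\<lambda>x. - (uxx t x * (u (t + h) x - u t x)) / h + Bxx * \<epsilon>') integrable_on {0..L}"
      by (intro integrable_continuous_real continuous_intros slice_x[OF cont_uxx t'(1), simplified]
          slice_x[OF cont_u t'(1), simplified] slice_x[OF cont_u t'(2), simplified]) (use hpos in auto)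
    have "Phi t \<le> integral {0..L} (\<lambda>x. - (uxx t x * (u (t + h) x - u t x)) / h + Bxx * \<epsilon>')"
      unfolding Phi_def
    proof (rule integral_le[OF ci ci2])
      fix x assume x: "x \<in> {0..L}"
      define D where "D = (u (t + h) x - u t x) / h"
      have "\<bar>D - ut t x\<bar> \<le> \<epsilon>'" unfolding D_def by (rule hd[OF hpos hd'(1) t x])
      moreover have "\<bar>uxx t x\<bar> \<le> Bxx" by (rule Bxx'[OF t'(1) x])
      ultimately have "\<bar>uxx t x\<bar> * \<bar>D - ut t x\<bar> \<le> Bxx * \<epsilon>'" by (intro mult_mono) auto
      then have "uxx t x * (D - ut t x) \<le> Bxx * \<epsilon>'" by (metis abs_ge_self abs_mult order_trans)
      moreover have "- (uxx t x * (u (t + h) x - u t x)) / h = - uxx t x * D" unfolding D_def by simp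
      ultimately show "- uxx t x * ut t x \<le> - (uxx t x * (u (t + h) x - u t x)) / h + Bxx * \<epsilon>'"
        by (simp add: algebra_simps)
    qed
    also have "\<dots> = (- integral {0..L} (\<lambda>x. uxx t x * (u (t + h) x - u t x))) / h + L * (Bxx * \<epsilon>')"
    proof -
      have in1: "(\<lambda>x. - (uxx t x * (u (t + h) x - u t x)) / h) integrable_on {0..L}"
        by (intro integrable_continuous_real continuous_intros slice_x[OF cont_uxx t'(1), simplified]
          slice_x[OF cont_u t'(1), simplified] slice_x[OF cont_u t'(2), simplified]) (use hpos in auto)
      have "integral {0..L} (\<lambda>x. - (uxx t x * (u (t + h) x - u t x)) / h + Bxx * \<epsilon>') =
          integral {0..L} (\<lambda>x. - (uxx t x * (u (t + h) x - u t x)) / h) + integral {0..L} (\<lambda>x. Bxx * \<epsilon>')"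
        by (rule integral_add[OF in1 integrable_const_ivl])
      also have "integral {0..L} (\<lambda>x. - (uxx t x * (u (t + h) x - u t x)) / h) = (- integral {0..L} (\<lambda>x. uxx t x * (u (t + h) x - u t x))) / h"
        by (simp only: integral_divide integral_neg)
      also have "integral {0..L} (\<lambda>x. Bxx * \<epsilon>') = L * (Bxx * \<epsilon>')" using L by simp
      finally show ?thesis .
    qed
    also have "\<dots> \<le> ((E (t + h) - E t) / 2) / h + L * (Bxx * \<epsilon>')"
      using divide_right_mono[OF ibp[OF t'(1) t'(2)], of h] hpos by simp
    finally show ?thesis by (simp add: algebra_simps)
  qed
  have cEh: "continuous_on {0..T-h} (\<lambda>t. E (t + h))"
    by (rule continuous_on_compose2[OF cont_E, of _ "\<lambda>t. t + h", simplified])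
       (use hpos in \<open>auto intro!: continuous_intros\<close>)
  have iE: "E integrable_on {0..T-h}" by (rule cont_int[OF cont_E]) (use hpos in auto)
  have iEh: "(\<lambda>t. E (t + h)) integrable_on {0..T-h}" by (rule integrable_continuous_real[OF cEh])
  have b1: "integral {0..T-h} Phi \<le> integral {0..T-h} (\<lambda>t. (E (t + h) - E t) / (2 * h) + L * Bxx * \<epsilon>')"
  proof (rule integral_le)
    show "Phi integrable_on {0..T-h}" by (rule cont_int[OF cont_Phi]) (use hpos in auto)
    show "(\<lambda>t. (E (t + h) - E t) / (2 * h) + L * Bxx * \<epsilon>') integrable_on {0..T-h}"
      by (intro integrable_continuous_real continuous_intros cEh continuous_on_subset[OF cont_E]) (use hpos in auto)
  qed (rule pa)
  also have "\<dots> = (integral {0..T-h} (\<lambda>t. E (t + h)) - integral {0..T-h} E) / (2 * h) + (T - h) * (L * Bxx * \<epsilon>')"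
  proof -
    have idf: "(\<lambda>t. E (t + h) - E t) integrable_on {0..T-h}" by (rule integrable_diff[OF iEh iE])
    have "integral {0..T-h} (\<lambda>t. (E (t + h) - E t) / (2 * h) + L * Bxx * \<epsilon>') =
        integral {0..T-h} (\<lambda>t. (E (t + h) - E t) / (2 * h)) + integral {0..T-h} (\<lambda>t. L * Bxx * \<epsilon>')"
      by (rule integral_add[OF integrable_on_divide[OF idf] integrable_const_ivl])
    also have "integral {0..T-h} (\<lambda>t. (E (t + h) - E t) / (2 * h)) = (integral {0..T-h} (\<lambda>t. E (t + h)) - integral {0..T-h} E) / (2 * h)"
      by (simp only: integral_divide integral_diff[OF iEh iE])
    also have "integral {0..T-h} (\<lambda>t. L * Bxx * \<epsilon>') = (T - h) * (L * Bxx * \<epsilon>')" using hT by simp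
    finally show ?thesis .
  qed
  finally have b2: "integral {0..T-h} Phi \<le> (integral {0..T-h} (\<lambda>t. E (t + h)) - integral {0..T-h} E) / (2 * h) + (T - h) * (L * Bxx * \<epsilon>')" .
  have shift: "integral {0..T-h} (\<lambda>t. E (t + h)) = integral {h..T} E"
  proof -
    have "continuous_on {h..T} E" by (rule continuous_on_subset[OF cont_E]) (use hpos in auto)
    then show ?thesis using integral_shift[of 0 h "T-h" E] by (simp add: o_def)
  qed
  have iE1: "E integrable_on {h..T}" "E integrable_on {h..T-h}" "E integrable_on {T-h..T}" "E integrable_on {0..h}"
    using hT hpos by (auto intro!: cont_int[OF cont_E])
  have sp1: "integral {h..T-h} E + integral {T-h..T} E = integral {h..T} E"
    by (rule Henstock_Kurzweil_Integration.integral_combine) (use hT hpos iE1 in auto)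
  have sp2: "integral {0..h} E + integral {h..T-h} E = integral {0..T-h} E"
    by (rule Henstock_Kurzweil_Integration.integral_combine) (use hT hpos iE in auto)
  have ub1: "integral {T-h..T} E \<le> integral {T-h..T} (\<lambda>t. L * (K * K))"
    by (rule integral_le[OF iE1(3) integrable_const_ivl]) (use E_bounds hT hpos in auto)
  have lb1: "0 \<le> integral {0..h} E"
  proof (rule integral_nonneg[OF iE1(4)])
    fix t assume t: "t \<in> {0..h}"
    show "0 \<le> E t"
    proof (cases "t = 0")
      case True
      have "(\<lambda>x. (ux 0 x)\<^sup>2) integrable_on {0..L}"
        by (intro integrable_continuous_real continuous_intros slice_x[OF cont_ux, simplified]) (use T in auto)
      then show ?thesis using True unfolding E_def by (intro integral_nonneg) auto
    next
      case False then show ?thesis using E_bounds(1)[of t] t hT by auto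
    qed
  qed
  have "integral {T-h..T} (\<lambda>t. L * (K * K)) = h * (L * (K * K))" using hpos by simp
  then have diff: "integral {0..T-h} (\<lambda>t. E (t + h)) - integral {0..T-h} E \<le> h * (L * (K * K))"
    using shift sp1 sp2 ub1 lb1 by linarith
  have b3: "(integral {0..T-h} (\<lambda>t. E (t + h)) - integral {0..T-h} E) / (2 * h) \<le> L * (K * K) / 2"
  proof -
    have "(integral {0..T-h} (\<lambda>t. E (t + h)) - integral {0..T-h} E) / (2 * h) \<le> (h * (L * (K * K))) / (2 * h)"
      using diff hpos by (intro divide_right_mono) auto
    also have "\<dots> = L * (K * K) / 2" using hpos by simp
    finally show ?thesis .
  qed
  have b4: "(T - h) * (L * Bxx * \<epsilon>') \<le> e / 2"
  proof -
    have "(T - h) * (L * Bxx * \<epsilon>') \<le> T * (L * Bxx * \<epsilon>')"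
      using hpos L Bxx epos by (intro mult_right_mono) auto
    also have "\<dots> = (T * L * Bxx) * e / (2 * C1)" unfolding \<epsilon>'_def by simp
    also have "\<dots> \<le> C1 * e / (2 * C1)" using e C1 unfolding C1_def by (intro divide_right_mono mult_right_mono) auto
    also have "\<dots> = e / 2" using C1 by simp
    finally show ?thesis .
  qed
  have pb: "Phi t \<le> L * Bxx * But" if t: "t \<in> {0..T}" for t
  proof -
    have "norm (integral {0..L} (\<lambda>x. - uxx t x * ut t x)) \<le> (Bxx * But) * (L - 0)"
    proof (rule integral_bound)
      show "0 \<le> L" using L by simp
      show "continuous_on {0..L} (\<lambda>x. - uxx t x * ut t x)"
        by (intro continuous_intros slice_x[OF cont_uxx t, simplified] slice_x[OF cont_ut t, simplified])
      fix x assume x: "x \<in> {0..L}"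
      show "norm (- uxx t x * ut t x) \<le> Bxx * But"
        using Bxx'[OF t x] But'[OF t x] by (simp add: abs_mult mult_mono')
    qed
    then show ?thesis unfolding Phi_def by (simp add: algebra_simps)
  qed
  have iP1: "Phi integrable_on {T-h..T}" "Phi integrable_on {0..T-h}" using hT hpos by (auto intro!: cont_int[OF cont_Phi])
  have e1: "integral {T-h..T} Phi \<le> integral {T-h..T} (\<lambda>t. L * Bxx * But)"
    by (rule integral_le[OF iP1(1) integrable_const_ivl]) (use pb hT in auto)
  also have "\<dots> = h * (L * Bxx * But)" using hpos by simp
  also have "\<dots> \<le> e / 2"
  proof -
    have "h * (L * Bxx * But) \<le> (e / (2 * C2)) * C2" using hd'(3) hpos L Bxx But unfolding C2_def
      by (intro mult_mono) auto
    also have "\<dots> = e / 2" using C2 by simp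
    finally show ?thesis .
  qed
  finally have e2: "integral {T-h..T} Phi \<le> e / 2" .
  have "integral {0..T-h} Phi + integral {T-h..T} Phi = integral {0..T} Phi"
    by (rule Henstock_Kurzweil_Integration.integral_combine) (use hT hpos cont_int[OF cont_Phi, of 0 T] in auto)
  then show "integral {0..T} Phi \<le> L * (K * K) / 2 + e" using b2 b3 b4 e2 by linarith
qed

lemma S_cbox: "S = cbox (0,0) (T,L)" by (simp add: cbox_Pair_eq)

lemma pw_interior:
  assumes t: "t \<in> {0<..<T}" and x: "x \<in> {0<..<L}"
  shows "(ut t x)\<^sup>2 \<le> \<sigma>\<^sup>2 * (- uxx t x * ut t x) + 2 * r * (u t x * ut t x) + M0 ^ 4"
proof -
  define a where "a = ut t x"
  define g where "g = Gfun \<epsilon> L ux m t x"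
  have eq: "a = - \<sigma>\<^sup>2 / 2 * uxx t x + r * u t x - g\<^sup>2" using hjb[OF t x] unfolding a_def g_def by linarith
  have gb: "\<bar>g\<bar> \<le> M0" unfolding g_def by (rule Gbound0[OF t]) (use x in auto)
  have g4: "g ^ 4 \<le> M0 ^ 4"
  proof -
    have "\<bar>g\<bar> ^ 4 \<le> M0 ^ 4" by (rule power_mono[OF gb]) simp
    moreover have "\<bar>g\<bar> ^ 4 = g ^ 4" by (simp add: power_even_abs)
    ultimately show ?thesis by simp
  qed
  have amg: "- (g\<^sup>2 * a) \<le> (g ^ 4 + a\<^sup>2) / 2"
  proof -
    have "0 \<le> (g\<^sup>2 + a)\<^sup>2" by simp
    then show ?thesis by (simp add: power2_eq_square power4_eq_xxxx algebra_simps)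
  qed
  have "a\<^sup>2 = a * (- \<sigma>\<^sup>2 / 2 * uxx t x + r * u t x - g\<^sup>2)" using eq by (simp add: power2_eq_square)
  also have "\<dots> = \<sigma>\<^sup>2 / 2 * (- uxx t x * a) + r * (u t x * a) - g\<^sup>2 * a" by (simp add: algebra_simps)
  finally have "a\<^sup>2 \<le> \<sigma>\<^sup>2 / 2 * (- uxx t x * a) + r * (u t x * a) + (g ^ 4 + a\<^sup>2) / 2" using amg by linarith
  then have "a\<^sup>2 \<le> \<sigma>\<^sup>2 * (- uxx t x * a) + 2 * r * (u t x * a) + g ^ 4" by (simp add: field_simps)
  then show ?thesis using g4 unfolding a_def by linarith
qed

lemma final:
  assumes Ub: "\<And>x. x \<in> {0..L} \<Longrightarrow> \<bar>uT x\<bar> \<le> Ub"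
  shows "integral S (\<lambda>(t,x). (ut t x)\<^sup>2) \<le> L * (K * K) / 2 + r * (L * (Ub * Ub)) + M0 ^ 4 * (T * L)"
proof -
  define R where "R = (\<lambda>(t,x). \<sigma>\<^sup>2 * (- uxx t x * ut t x) + 2 * r * (u t x * ut t x) + M0 ^ 4)"
  have cL: "continuous_on S (\<lambda>(t,x). (ut t x)\<^sup>2)"
    using continuous_on_power[OF cont_ut, of 2] by (simp add: case_prod_beta)
  have cA: "continuous_on S (\<lambda>(t,x). - uxx t x * ut t x)"
    using continuous_on_mult[OF continuous_on_minus[OF cont_uxx] cont_ut] by (simp add: case_prod_beta)
  have cB: "continuous_on S (\<lambda>(t,x). u t x * ut t x)"
    using continuous_on_mult[OF cont_u cont_ut] by (simp add: case_prod_beta)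
  have cR: "continuous_on S R" unfolding R_def
    using continuous_on_add[OF continuous_on_add[OF continuous_on_mult[OF continuous_on_const[of S "\<sigma>\<^sup>2"] cA]
      continuous_on_mult[OF continuous_on_const[of S "2 * r"] cB]] continuous_on_const[of S "M0 ^ 4"]]
    by (simp add: case_prod_beta)
  have pw: "(\<lambda>(t,x). (ut t x)\<^sup>2) p \<le> R p" if p: "p \<in> S" for p
  proof -
    define f where "f = (\<lambda>p. R p - (\<lambda>(t,x). (ut t x)\<^sup>2) p)"
    have cl: "closure ({0<..<T} \<times> {0<..<L}) = S" using T L by (simp add: closure_Times)
    have cf: "continuous_on (closure ({0<..<T} \<times> {0<..<L})) f" unfolding cl f_def
      by (intro continuous_intros cR cL)
    have "f p \<ge> 0"
    proof (rule continuous_ge_on_closure[OF cf])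
      show "p \<in> closure ({0<..<T} \<times> {0<..<L})" using p cl by simp
      fix q assume "q \<in> {0<..<T} \<times> {0<..<L}"
      then obtain t x where q: "q = (t,x)" "t \<in> {0<..<T}" "x \<in> {0<..<L}" by auto
      show "0 \<le> f q" unfolding f_def R_def q(1) using pw_interior[OF q(2,3)] by simp
    qed
    then show ?thesis unfolding f_def by simp
  qed
  have i1: "integral S (\<lambda>(t,x). (ut t x)\<^sup>2) \<le> integral S R"
    unfolding S_cbox by (rule integral_le[OF integrable_continuous integrable_continuous]) (use cL cR pw S_cbox in auto)
  have iA: "(\<lambda>(t,x). - uxx t x * ut t x) integrable_on S" unfolding S_cbox by (rule integrable_continuous) (use cA S_cbox in auto)
  have iB: "(\<lambda>(t,x). u t x * ut t x) integrable_on S" unfolding S_cbox by (rule integrable_continuous) (use cB S_cbox in auto)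
  have "integral S R = \<sigma>\<^sup>2 * integral S (\<lambda>(t,x). - uxx t x * ut t x) + 2 * r * integral S (\<lambda>(t,x). u t x * ut t x) + integral S (\<lambda>p. M0 ^ 4)"
  proof -
    have "R = (\<lambda>p. (\<sigma>\<^sup>2 * (\<lambda>(t,x). - uxx t x * ut t x) p + 2 * r * (\<lambda>(t,x). u t x * ut t x) p) + M0 ^ 4)"
      unfolding R_def by (auto simp: case_prod_beta)
    moreover have iC: "(\<lambda>p. M0 ^ 4) integrable_on S" unfolding S_cbox by (rule integrable_continuous) (rule continuous_on_const)
    moreover have iA': "(\<lambda>p. \<sigma>\<^sup>2 * (\<lambda>(t,x). - uxx t x * ut t x) p) integrable_on S" using integrable_on_cmult_left[OF iA, of "\<sigma>\<^sup>2"] by simp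
    moreover have iB': "(\<lambda>p. 2 * r * (\<lambda>(t,x). u t x * ut t x) p) integrable_on S" using integrable_on_cmult_left[OF iB, of "2 * r"] by simp
    ultimately show ?thesis
      by (simp add: integral_add integrable_add integral_mult_right del: split_paired_all)
  qed
  also have "integral S (\<lambda>p. M0 ^ 4) = M0 ^ 4 * (T * L)"
    using T L unfolding S_cbox by (simp add: content_Pair)
  also have "integral S (\<lambda>(t,x). - uxx t x * ut t x) = integral {0..T} Phi"
    unfolding S_cbox Phi_def using integral_prod_continuous[of 0 0 T L "\<lambda>(t,x). - uxx t x * ut t x"] cA S_cbox by simp
  also have "integral S (\<lambda>(t,x). u t x * ut t x) = integral {0..T} (\<lambda>t. integral {0..L} (\<lambda>x. u t x * ut t x))"
    unfolding S_cbox using integral_prod_continuous[of 0 0 T L "\<lambda>(t,x). u t x * ut t x"] cB S_cbox by simp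
  finally have i2: "integral S (\<lambda>(t,x). (ut t x)\<^sup>2) \<le> \<sigma>\<^sup>2 * integral {0..T} Phi + 2 * r * integral {0..T} (\<lambda>t. integral {0..L} (\<lambda>x. u t x * ut t x)) + M0 ^ 4 * (T * L)"
    using i1 by simp
  define U where "U = (\<lambda>t. integral {0..L} (\<lambda>x. (u t x)\<^sup>2 / 2))"
  have Ud: "(U has_real_derivative integral {0..L} (\<lambda>x. u t x * ut t x)) (at t within {0..T})" if t: "t \<in> {0..T}" for t
  proof -
    have "((\<lambda>t. integral (cbox 0 L) (\<lambda>x. (u t x)\<^sup>2 / 2)) has_real_derivative integral (cbox 0 L) (\<lambda>x. u t x * ut t x)) (at t within {0..T})"
    proof (rule leibniz_rule_field_derivative[where f="\<lambda>t x. (u t x)\<^sup>2 / 2" and fx="\<lambda>t x. u t x * ut t x"])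
      fix s y assume sy: "s \<in> {0..T}" "y \<in> cbox 0 L"
      show "((\<lambda>s. (u s y)\<^sup>2 / 2) has_real_derivative u s y * ut s y) (at s within {0..T})"
        using der(1)[of s y] sy by (auto intro!: derivative_eq_intros)
    next
      fix s assume "s \<in> {0..T}"
      then show "(\<lambda>x. (u s x)\<^sup>2 / 2) integrable_on cbox 0 L"
        by (auto intro!: integrable_continuous_real continuous_intros slice_x[OF cont_u, simplified])
    next
      show "continuous_on ({0..T} \<times> cbox 0 L) (\<lambda>(x, t). u x t * ut x t)" using cB by simp
    qed (use t in auto)
    then show ?thesis unfolding U_def by simp
  qed
  have "((\<lambda>t. integral {0..L} (\<lambda>x. u t x * ut t x)) has_integral (U T - U 0)) {0..T}"
  proof (rule fundamental_theorem_of_calculus)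
    show "0 \<le> T" using T by simp
    fix t assume "t \<in> {0..T}"
    then show "(U has_vector_derivative integral {0..L} (\<lambda>x. u t x * ut t x)) (at t within {0..T})"
      using Ud has_real_derivative_iff_has_vector_derivative by blast
  qed
  then have iU: "integral {0..T} (\<lambda>t. integral {0..L} (\<lambda>x. u t x * ut t x)) = U T - U 0" by (rule integral_unique)
  have U0: "U 0 \<ge> 0" unfolding U_def
    by (rule integral_nonneg) (use T in \<open>auto intro!: integrable_continuous_real continuous_intros slice_x[OF cont_u, simplified]\<close>)
  have UT: "U T \<le> L * (Ub * Ub) / 2"
  proof -
    have "U T \<le> integral {0..L} (\<lambda>x. Ub * Ub / 2)" unfolding U_def
    proof (rule integral_le)
      show "(\<lambda>x. (u T x)\<^sup>2 / 2) integrable_on {0..L}"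
        using T by (auto intro!: integrable_continuous_real continuous_intros slice_x[OF cont_u, simplified])
      fix x assume x: "x \<in> {0..L}"
      have "\<bar>u T x\<bar> \<le> Ub" using Ub[OF x] termc[OF x] by simp
      then have "\<bar>u T x\<bar> * \<bar>u T x\<bar> \<le> Ub * Ub" by (intro mult_mono) auto
      then show "(u T x)\<^sup>2 / 2 \<le> Ub * Ub / 2" by (simp add: power2_eq_square abs_mult_self_eq)
    qed auto
    also have "\<dots> = L * (Ub * Ub) / 2" using L by simp
    finally show ?thesis .
  qed
  have ph: "\<sigma>\<^sup>2 * integral {0..T} Phi \<le> L * (K * K) / 2"
  proof -
    have s2: "0 < \<sigma>\<^sup>2" "\<sigma>\<^sup>2 \<le> 1" using sig by (auto simp: power_le_one)
    have "\<sigma>\<^sup>2 * integral {0..T} Phi \<le> \<sigma>\<^sup>2 * (L * (K * K) / 2)"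
      using energy_key s2 by (intro mult_left_mono) auto
    also have "\<dots> \<le> 1 * (L * (K * K) / 2)" using s2 L by (intro mult_right_mono) auto
    finally show ?thesis by simp
  qed
  have "2 * r * integral {0..T} (\<lambda>t. integral {0..L} (\<lambda>x. u t x * ut t x)) \<le> 2 * r * (L * (Ub * Ub) / 2)"
    unfolding iU using UT U0 r by (intro mult_left_mono) auto
  then show ?thesis using i2 ph by simp
qed

end

theorem lemma4p1:
  fixes L T r \<epsilon> \<gamma> :: real
    and uT uT1 uT2 m0 m01 m02 :: "real \<Rightarrow> real"
  assumes "L > 0" and "T > 0" and "r > 0" and "\<epsilon> > 0" and "\<gamma> > 0"
    and "C2gamma L \<gamma> uT uT1 uT2" and "C2gamma L \<gamma> m0 m01 m02"
    and "uT1 0 = 0" and "uT1 L = 0"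
    and "m0 0 = 0" and "m01 0 = 0" and "m0 L = 0" and "m01 L = 0"
    and "\<forall>x\<in>{0..L}. m0 x \<ge> 0" and "integral {0..L} m0 = 1"
    and "\<forall>x\<in>{0..L}. uT x \<ge> 0"
  shows "\<exists>C. \<forall>\<sigma> u ut ux uxx m mt mx mxx.
           0 < \<sigma> \<and> \<sigma> \<le> 1 \<and> classical_solution L T r \<epsilon> \<sigma> uT m0 u ut ux uxx m mt mx mxx \<longrightarrow>
           sqrt (integral ({0..T} \<times> {0..L}) (\<lambda>(t,x). (ut t x)\<^sup>2)) \<le> C"
proof -
  have dT: "\<And>x. x \<in> {0..L} \<Longrightarrow> (uT has_real_derivative uT1 x) (at x within {0..L})"
    and dT1: "\<And>x. x \<in> {0..L} \<Longrightarrow> (uT1 has_real_derivative uT2 x) (at x within {0..L})"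
    using assms(6) unfolding C2gamma_def by auto
  have cT: "continuous_on {0..L} uT" by (rule DERIV_continuous_on[OF dT])
  have cT1: "continuous_on {0..L} uT1" by (rule DERIV_continuous_on[OF dT1])
  obtain K0 where K0: "K0 > 0" "\<And>x. x \<in> {0..L} \<Longrightarrow> \<bar>uT1 x\<bar> \<le> K0"
    using cont_bound[OF cT1 compact_Icc] by blast
  obtain Ub where Ub: "Ub > 0" "\<And>x. x \<in> {0..L} \<Longrightarrow> \<bar>uT x\<bar> \<le> Ub"
    using cont_bound[OF cT compact_Icc] by blast
  have lipT: "\<bar>uT x - uT y\<bar> \<le> K0 * \<bar>x - y\<bar>" if x: "x \<in> {0..L}" and y: "y \<in> {0..L}" for x y
  proof -
    have gen: "\<bar>uT b - uT a\<bar> \<le> K0 * (b - a)" if ab: "a < b" "a \<in> {0..L}" "b \<in> {0..L}" for a b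
    proof -
      have c: "continuous_on {a..b} uT" by (rule continuous_on_subset[OF cT]) (use ab in auto)
      have dif: "\<And>z. a < z \<Longrightarrow> z < b \<Longrightarrow> uT differentiable (at z)"
      proof -
        fix z assume z: "a < z" "z < b"
        then have "z \<in> {0<..<L}" using ab by auto
        then have "(uT has_real_derivative uT1 z) (at z)" using dT[of z] at_within_Icc_at[of 0 z L] by auto
        then show "uT differentiable (at z)" using real_differentiable_def by blast
      qed
      obtain l z where z: "a < z" "z < b" and dz: "(uT has_real_derivative l) (at z)" and eq: "uT b - uT a = (b - a) * l"
        using MVT[OF ab(1) c dif] by blast
      have zi: "z \<in> {0<..<L}" using z ab by auto
      then have "(uT has_real_derivative uT1 z) (at z)" using dT[of z] at_within_Icc_at[of 0 z L] by auto
      then have "l = uT1 z" using DERIV_unique[OF dz] by blast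
      then have "\<bar>l\<bar> \<le> K0" using K0(2)[of z] zi by auto
      then have "\<bar>b - a\<bar> * \<bar>l\<bar> \<le> (b - a) * K0" using ab by (intro mult_mono) auto
      moreover have "\<bar>uT b - uT a\<bar> = \<bar>b - a\<bar> * \<bar>l\<bar>" using eq by (simp add: abs_mult)
      ultimately show ?thesis by (simp add: algebra_simps)
    qed
    show ?thesis
    proof (cases rule: linorder_cases[of x y])
      case less then show ?thesis using gen[of x y] x y by (simp add: abs_minus_commute)
    next
      case equal then show ?thesis by simp
    next
      case greater then show ?thesis using gen[of y x] x y by simp
    qed
  qed
  define K where "K = K0 + 1"
  have Kpos: "K > 0" using K0 unfolding K_def by simp
  have Klip: "\<bar>uT x - uT y\<bar> \<le> K * \<bar>x - y\<bar>" if "x \<in> {0..L}" "y \<in> {0..L}" for x y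
  proof -
    have "K0 * \<bar>x - y\<bar> \<le> K * \<bar>x - y\<bar>" unfolding K_def by (intro mult_right_mono) auto
    then show ?thesis using lipT[OF that] by linarith
  qed
  define C where "C = sqrt (L * (K * K) / 2 + r * (L * (Ub * Ub)) + ((1 + 2 * K) / 2) ^ 4 * (T * L))"
  show ?thesis
  proof (rule exI[of _ C], intro allI impI)
    fix \<sigma> u ut ux uxx m mt mx mxx
    assume h: "0 < \<sigma> \<and> \<sigma> \<le> 1 \<and> classical_solution L T r \<epsilon> \<sigma> uT m0 u ut ux uxx m mt mx mxx"
    interpret sol L T r \<epsilon> \<sigma> K uT m0 u ut ux uxx m mt mx mxx
      by (unfold_locales) (use assms h Kpos Klip in auto)
    have "integral ({0..T} \<times> {0..L}) (\<lambda>(t,x). (ut t x)\<^sup>2) \<le> L * (K * K) / 2 + r * (L * (Ub * Ub)) + M0 ^ 4 * (T * L)"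
      by (rule final[OF Ub(2)])
    then show "sqrt (integral ({0..T} \<times> {0..L}) (\<lambda>(t,x). (ut t x)\<^sup>2)) \<le> C"
      unfolding C_def M0_def by (rule real_sqrt_le_mono)
  qed
qed

end
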